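(* In the setting described in the context (with $\theta\in\operatorname{Irr}(Z)$ faithful), for $\{i,j\}=\{1,2\}$ and every $a\in A_i=k[D_i\rtimes P_i]$, $$\iota_i(a)=\sum_{g\in L_i}\big(a\,e_{1_{L_j}}\,e_\theta\big)^g,$$ where $e_{1_{L_j}}\in kL_j$ is the central primitive idempotent of the trivial character of $L_j$ and $x^g=g^{-1}xg$.
   Context: Let $\ell$ be a prime and $k$ an algebraically closed field of characteristic $\ell$. Let $p\neq\ell$ be a prime and $L=\langle g_0\rangle\le\mathbb F_p^\times$ a subgroup of order $r>1$ with $\ell\nmid r$. For $i\in\{1,2\}$ let $P_i=(\mathbb F_p,+)$ and $D_i=\big(\prod_{x\in P_i}C_\ell\big)/\{(c,\dots,c):c\in C_\ell\}$; fixing a generator $d$ of $C_\ell$, $d_i^x\in D_i$ is the image of the tuple with $d$ in position $x$ and $1$ elsewhere; $P_i$ acts on $D_i$ by $(d_i^x)^y=d_i^{x+y}$, and $A_i=k[D_i\rtimes P_i]$. Let $H=\langle g_1,g_2,g_z\mid g_1^r=g_2^r=g_z^r=1,[g_1,g_z]=[g_2,g_z]=1,[g_1,g_2]=g_z\rangle$ with $[g,h]=ghg^{-1}h^{-1}$; $L_1=\langle g_1\rangle$, $L_2=\langle g_2\rangle$, $Z=\langle g_z\rangle$. $H$ acts on $N=(D_1\rtimes P_1)\times(D_2\rtimes P_2)$ with kernel $Z$: for $\{i,j\}=\{1,2\}$, $g_i$ acts trivially on $D_j\rtimes P_j$ and by $(d_i^xy)^{g_i}=d_i^{g_0x}(g_0y)$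 on $D_i\rtimes P_i$. $G=N\rtimes H$, with $x^g=g^{-1}xg$. Characters of $\ell'$-groups are over $k$; $e_\theta\in kZ$ is the central primitive idempotent of the faithful character $\theta\in\operatorname{Irr}(Z)$. For $\{i,j\}=\{1,2\}$ and $\chi\in\operatorname{Irr}(L_i)$, $h_{\chi,i}$ is the unique element of $L_j$ with $\chi(g)=\theta([h_{\chi,i},g])$ for all $g\in L_i$. Viewing $A_i\subseteq kG$, $A_i=\bigoplus_{\chi\in\operatorname{Irr}(L_i)}A_i^\chi$ with $A_i^\chi=\{a\in A_i:a^g=\chi(g)a\ \forall g\in L_i\}$, and $\iota_i:A_i\to kG$ is the linear map with $\iota_i(a)=a\,h_{\chi,i}^{-1}e_\theta$ for $a\in A_i^\chi$. *)

theory Defs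
  imports "HOL-Algebra.Group" "HOL-Number_Theory.Number_Theory"
          "HOL-Computational_Algebra.Polynomial"
begin

text \<open>Parameters: p (the prime with P_i = F_p), l (the characteristic ell),
  r (order of L), g0 (generator of L inside F_p^*).  Residues mod p are
  represented by integers in [0,p); C_ell additively by integers in [0,ell).\<close>

type_synonym delem = "int \<Rightarrow> int"
type_synonym dpelem = "delem \<times> int"         \<comment> \<open>element d y of D_i \<rtimes> P_i\<close>
type_synonym helem = "int \<times> int \<times> int"     \<comment> \<open>(a,b,c) = g1^a g2^b gz^c\<close>
type_synonym gelem = "(dpelem \<times> dpelem) \<times> helem" \<comment> \<open>(n,h) = n h\<close>

text \<open>D = (C_ell)^{F_p} / diagonal: a function F_p -> Z/ell, normalised to
  vanish at position 0 (and outside [0,p)).\<close>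
definition Dnorm :: "nat \<Rightarrow> nat \<Rightarrow> (int \<Rightarrow> int) \<Rightarrow> delem" where
  "Dnorm p l f = (\<lambda>x. if 0 \<le> x \<and> x < int p then (f x - f 0) mod int l else 0)"

definition Dset :: "nat \<Rightarrow> nat \<Rightarrow> delem set" where
  "Dset p l = {f. \<exists>g. f = Dnorm p l g}"

definition Dmul :: "nat \<Rightarrow> nat \<Rightarrow> delem \<Rightarrow> delem \<Rightarrow> delem" where
  "Dmul p l f f' = Dnorm p l (\<lambda>x. f x + f' x)"

text \<open>shift y: (d^x)^y = d^{x+y}\<close>
definition Dshift :: "nat \<Rightarrow> nat \<Rightarrow> int \<Rightarrow> delem \<Rightarrow> delem" where
  "Dshift p l y f = Dnorm p l (\<lambda>x. f ((x - y) mod int p))"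

text \<open>the automorphism d^x |-> d^{s x} where c is the inverse of s mod p\<close>
definition Dmulpos :: "nat \<Rightarrow> nat \<Rightarrow> int \<Rightarrow> delem \<Rightarrow> delem" where
  "Dmulpos p l c f = Dnorm p l (\<lambda>z. f ((c * z) mod int p))"

definition DPset :: "nat \<Rightarrow> nat \<Rightarrow> dpelem set" where
  "DPset p l = Dset p l \<times> {0..<int p}"

definition DPone :: dpelem where
  "DPone = ((\<lambda>_. 0), 0)"

text \<open>(d y)(d' y') = d (y d' y^{-1}) (y+y'), with y d' y^{-1} = d'^{-y}\<close>
definition DPmul :: "nat \<Rightarrow> nat \<Rightarrow> dpelem \<Rightarrow> dpelem \<Rightarrow> dpelem" where
  "DPmul p l u v = (Dmul p l (fst u) (Dshift p l (- snd u) (fst v)), (snd u + snd v) mod int p)"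

text \<open>psi^e where psi(d^x y) = d^{g0 x} (g0 y) is the action of g_i on
  D_i \<rtimes> P_i; g0^{-e} = g0^{(r-1) e} mod p.\<close>
definition psi :: "nat \<Rightarrow> nat \<Rightarrow> nat \<Rightarrow> nat \<Rightarrow> nat \<Rightarrow> dpelem \<Rightarrow> dpelem" where
  "psi p l r g0 e u =
     (Dmulpos p l ((int g0 ^ ((r - 1) * e)) mod int p) (fst u), (int g0 ^ e * snd u) mod int p)"

definition Hset :: "nat \<Rightarrow> helem set" where
  "Hset r = {0..<int r} \<times> {0..<int r} \<times> {0..<int r}"

text \<open>g2^b g1^a' = g1^a' g2^b gz^{-a'b}, since [g1,g2] = g1 g2 g1^-1 g2^-1 = gz is central\<close>
definition Hmul :: "nat \<Rightarrow> helem \<Rightarrow> helem \<Rightarrow> helem" where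
  "Hmul r h h' = (case h of (a,b,c) \<Rightarrow> case h' of (a',b',c') \<Rightarrow>
      ((a + a') mod int r, (b + b') mod int r, (c + c' - a' * b) mod int r))"

definition Gset :: "nat \<Rightarrow> nat \<Rightarrow> nat \<Rightarrow> gelem set" where
  "Gset p l r = (DPset p l \<times> DPset p l) \<times> Hset r"

text \<open>(n h)(n' h') = n (h n' h^{-1}) h h', where h n' h^{-1} = n'^{h^{-1}} and
  g1^a g2^b gz^c acts (on the right) on N by (psi^a, psi^b)\<close>
definition Gmul :: "nat \<Rightarrow> nat \<Rightarrow> nat \<Rightarrow> nat \<Rightarrow> gelem \<Rightarrow> gelem \<Rightarrow> gelem" where
  "Gmul p l r g0 x y =
     (case x of ((n1, n2), (a, b, c)) \<Rightarrow> case y of ((n1', n2'), h') \<Rightarrow>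
       ((DPmul p l n1 (psi p l r g0 ((r - 1) * nat a) n1'),
         DPmul p l n2 (psi p l r g0 ((r - 1) * nat b) n2')),
        Hmul r (a, b, c) h'))"

definition Gone :: gelem where
  "Gone = ((DPone, DPone), (0, 0, 0))"

definition Grp :: "nat \<Rightarrow> nat \<Rightarrow> nat \<Rightarrow> nat \<Rightarrow> gelem monoid" where
  "Grp p l r g0 = \<lparr>carrier = Gset p l r, mult = Gmul p l r g0, one = Gone\<rparr>"

definition embDP :: "nat \<Rightarrow> dpelem \<Rightarrow> gelem" where
  "embDP i u = (if i = 1 then ((u, DPone), (0,0,0)) else ((DPone, u), (0,0,0)))"

definition Lsub :: "nat \<Rightarrow> nat \<Rightarrow> gelem set" where
  "Lsub r i = (\<lambda>t. ((DPone, DPone), if i = 1 then (t, 0, 0) else (0, t, 0))) ` {0..<int r}"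

definition Zsub :: "nat \<Rightarrow> gelem set" where
  "Zsub r = (\<lambda>t. ((DPone, DPone), (0, 0, t))) ` {0..<int r}"

section \<open>The group algebra kG (elements: functions G -> k supported on G)\<close>

type_synonym 'k galg = "gelem \<Rightarrow> 'k"

definition supported_in :: "gelem set \<Rightarrow> 'k::zero galg \<Rightarrow> bool" where
  "supported_in S u \<longleftrightarrow> (\<forall>x. u x \<noteq> 0 \<longrightarrow> x \<in> S)"

definition conv :: "gelem monoid \<Rightarrow> 'k::comm_ring_1 galg \<Rightarrow> 'k galg \<Rightarrow> 'k galg" where
  "conv G u v = (\<lambda>x. \<Sum>g\<in>carrier G. \<Sum>h\<in>carrier G.
                    if g \<otimes>\<^bsub>G\<^esub> h = x then u g * v h else 0)"

definition delta :: "gelem \<Rightarrow> 'k::zero_neq_one galg" where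
  "delta g = (\<lambda>x. if x = g then 1 else 0)"

definition conjg :: "gelem monoid \<Rightarrow> 'k::comm_ring_1 galg \<Rightarrow> gelem \<Rightarrow> 'k galg" where
  "conjg G u g = conv G (conv G (delta (inv\<^bsub>G\<^esub> g)) u) (delta g)"

definition commut :: "gelem monoid \<Rightarrow> gelem \<Rightarrow> gelem \<Rightarrow> gelem" where
  "commut G g h = g \<otimes>\<^bsub>G\<^esub> h \<otimes>\<^bsub>G\<^esub> inv\<^bsub>G\<^esub> g \<otimes>\<^bsub>G\<^esub> inv\<^bsub>G\<^esub> h"

text \<open>A_i = k[D_i \<rtimes> P_i] viewed inside kG\<close>
definition Aalg :: "nat \<Rightarrow> nat \<Rightarrow> nat \<Rightarrow> 'k::zero galg set" where
  "Aalg p l i = {u. supported_in (embDP i ` DPset p l) u}"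

text \<open>Irreducible characters (over k) of the cyclic l'-group L_i: group
  homomorphisms L_i -> k^*, extended by 0 outside L_i.\<close>
definition Irr :: "gelem monoid \<Rightarrow> gelem set \<Rightarrow> (gelem \<Rightarrow> 'k::field) set" where
  "Irr G S = {\<chi>. (\<forall>x\<in>S. \<forall>y\<in>S. \<chi> (x \<otimes>\<^bsub>G\<^esub> y) = \<chi> x * \<chi> y)
              \<and> (\<forall>x\<in>S. \<chi> x \<noteq> 0) \<and> (\<forall>x. x \<notin> S \<longrightarrow> \<chi> x = 0)}"

definition cpi :: "gelem monoid \<Rightarrow> gelem set \<Rightarrow> (gelem \<Rightarrow> 'k::field) \<Rightarrow> 'k galg" where
  "cpi G S \<chi> = (\<lambda>x. (1 / of_nat (card S)) * (\<Sum>s\<in>S. \<chi> (inv\<^bsub>G\<^esub> s) * delta s x))"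

definition Achi :: "nat \<Rightarrow> nat \<Rightarrow> nat \<Rightarrow> nat \<Rightarrow> nat \<Rightarrow> (gelem \<Rightarrow> 'k::field) \<Rightarrow> 'k galg set" where
  "Achi p l r g0 i \<chi> = {a \<in> Aalg p l i.
      \<forall>g\<in>Lsub r i. conjg (Grp p l r g0) a g = (\<lambda>x. \<chi> g * a x)}"

definition hchi :: "nat \<Rightarrow> nat \<Rightarrow> nat \<Rightarrow> nat \<Rightarrow> (gelem \<Rightarrow> 'k::field) \<Rightarrow> nat \<Rightarrow> (gelem \<Rightarrow> 'k) \<Rightarrow> gelem" where
  "hchi p l r g0 \<theta> i \<chi> = (THE h. h \<in> Lsub r (3 - i) \<and>
      (\<forall>g\<in>Lsub r i. \<chi> g = \<theta> (commut (Grp p l r g0) h g)))"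

text \<open>iota_i: the k-linear map A_i -> kG with iota_i(a) = a h_{chi,i}^{-1} e_theta
  for a in A_i^chi (made unique by requiring value 0 outside A_i)\<close>
definition iota :: "nat \<Rightarrow> nat \<Rightarrow> nat \<Rightarrow> nat \<Rightarrow> (gelem \<Rightarrow> 'k::field) \<Rightarrow> nat \<Rightarrow> 'k galg \<Rightarrow> 'k galg" where
  "iota p l r g0 \<theta> i = (THE f.
      (\<forall>a\<in>Aalg p l i. \<forall>b\<in>Aalg p l i. f (\<lambda>x. a x + b x) = (\<lambda>x. f a x + f b x))
    \<and> (\<forall>c. \<forall>a\<in>Aalg p l i. f (\<lambda>x. c * a x) = (\<lambda>x. c * f a x))
    \<and> (\<forall>\<chi>\<in>Irr (Grp p l r g0) (Lsub r i). \<forall>a\<in>Achi p l r g0 i \<chi>.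
         f a = conv (Grp p l r g0)
                 (conv (Grp p l r g0) a (delta (inv\<^bsub>Grp p l r g0\<^esub> (hchi p l r g0 \<theta> i \<chi>))))
                 (cpi (Grp p l r g0) (Zsub r) \<theta>))
    \<and> (\<forall>a. a \<notin> Aalg p l i \<longrightarrow> f a = (\<lambda>_. 0)))"

end

theory Submission
  imports Defs
begin


lemma mod_trick1: "((a::int) mod n + b - c) mod n = (a + b - c) mod n"
  by (metis mod_add_left_eq mod_diff_left_eq)
lemma mod_trick3: "((a::int) + b mod n - (c + d mod n)) mod n = (a + b - (c + d)) mod n"
  by (metis mod_diff_eq mod_add_right_eq)
lemma mod_tA: "((A::int) mod n + B - C * (D mod n)) mod n = (A + B - C * D) mod n"
  by (metis mod_diff_eq mod_add_left_eq mod_mult_right_eq)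
lemma mod_tB: "((A::int) + B mod n - (C mod n) * D) mod n = (A + B - C * D) mod n"
  by (metis mod_diff_eq mod_add_right_eq mod_mult_left_eq)
lemma mod_trick2: "((b::int) + a mod n - c) mod n = (b + a - c) mod n"
  by (metis add.commute mod_trick1)

locale GS =
  fixes p l r g0 :: nat
  assumes p1: "p > 1" and l1: "l > 1" and r1: "r > 1"
    and g0r: "int g0 ^ r mod int p = 1"
begin

lemma Dnorm_at0: "Dnorm p l f 0 = 0"
  using p1 unfolding Dnorm_def by auto

lemma Dnorm_addL: "Dnorm p l (\<lambda>x. Dnorm p l f x + g x) = Dnorm p l (\<lambda>x. f x + g x)"
  unfolding Dnorm_def[of p l "\<lambda>x. Dnorm p l f x + g x"] Dnorm_def[of p l "\<lambda>x. f x + g x"]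
  using p1 apply (auto simp: Dnorm_at0 fun_eq_iff) apply (simp add: Dnorm_def) apply (subst mod_trick1) by (simp add: algebra_simps)

lemma Dnorm_addR: "Dnorm p l (\<lambda>x. g x + Dnorm p l f x) = Dnorm p l (\<lambda>x. g x + f x)"
  using Dnorm_addL[of f g] by (simp add: add.commute)

lemma Dnorm_idx: "Dnorm p l (\<lambda>x. Dnorm p l f (k x mod int p)) = Dnorm p l (\<lambda>x. f (k x mod int p))"
  unfolding Dnorm_def[of p l "\<lambda>x. Dnorm p l f (k x mod int p)"] Dnorm_def[of p l "\<lambda>x. f (k x mod int p)"]
  using p1 apply (auto simp: fun_eq_iff) by (simp add: Dnorm_def mod_diff_eq)

lemma Dnorm_idem: "Dnorm p l (Dnorm p l f) = Dnorm p l f"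
  using Dnorm_addL[of f "\<lambda>_. 0"] by simp

lemma Dset_fix: "f \<in> Dset p l \<Longrightarrow> Dnorm p l f = f"
  unfolding Dset_def using Dnorm_idem by auto

lemma Dset_0: "f \<in> Dset p l \<Longrightarrow> f 0 = 0"
  unfolding Dset_def using Dnorm_at0 by auto

lemma Dmul_assoc: "Dmul p l (Dmul p l f g) h = Dmul p l f (Dmul p l g h)"
  unfolding Dmul_def by (simp add: Dnorm_addL Dnorm_addR add.assoc)

lemma Dshift_Dmul: "Dshift p l y (Dmul p l f g) = Dmul p l (Dshift p l y f) (Dshift p l y g)"
  unfolding Dmul_def Dshift_def by (simp add: Dnorm_addL Dnorm_addR Dnorm_idx)

lemma Dshift_Dshift: "Dshift p l y (Dshift p l y' f) = Dshift p l (y + y') f"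
  unfolding Dshift_def by (simp add: Dnorm_idx mod_simps algebra_simps)

lemma Dshift_mod: "Dshift p l (y mod int p) f = Dshift p l y f"
  unfolding Dshift_def by (simp add: mod_simps algebra_simps)

lemma Dnorm_addR_idx: "Dnorm p l (\<lambda>x. g x + Dnorm p l f (k x mod int p)) = Dnorm p l (\<lambda>x. g x + f (k x mod int p))"
  unfolding Dnorm_def[of p l "\<lambda>x. g x + Dnorm p l f (k x mod int p)"] Dnorm_def[of p l "\<lambda>x. g x + f (k x mod int p)"]
  using p1 apply (auto simp: fun_eq_iff) apply (simp add: Dnorm_def)
  apply (subst mod_trick3) by (simp add: algebra_simps)

lemma Dnorm_addL_idx: "Dnorm p l (\<lambda>x. Dnorm p l f (k x mod int p) + g x) = Dnorm p l (\<lambda>x. f (k x mod int p) + g x)"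
  using Dnorm_addR_idx[of g f k] by (simp add: add.commute)

lemma Dnorm_zero: "Dnorm p l (\<lambda>_. 0) = (\<lambda>_. 0)"
  unfolding Dnorm_def by auto

lemma Dshift_zero: "Dshift p l y (\<lambda>_. 0) = (\<lambda>_. 0)"
  unfolding Dshift_def by (simp add: Dnorm_zero)

lemma Dmulpos_zero: "Dmulpos p l c (\<lambda>_. 0) = (\<lambda>_. 0)"
  unfolding Dmulpos_def by (simp add: Dnorm_zero)

lemma Dshift_cong: "y mod int p = y' mod int p \<Longrightarrow> Dshift p l y f = Dshift p l y' f"
  unfolding Dshift_def by (metis mod_diff_right_eq)

lemma Dshift_0: "f \<in> Dset p l \<Longrightarrow> Dshift p l 0 f = f"
proof -
  assume f: "f \<in> Dset p l"
  have "Dshift p l 0 f = Dnorm p l (\<lambda>x. f (x mod int p))" unfolding Dshift_def by simp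
  also have "\<dots> = Dnorm p l f" unfolding Dnorm_def by (auto simp: fun_eq_iff)
  finally show ?thesis using Dset_fix[OF f] by simp
qed

lemma Dmul_0L: "f \<in> Dset p l \<Longrightarrow> Dmul p l (\<lambda>_. 0) f = f"
  unfolding Dmul_def using Dset_fix by simp

lemma Dmul_0R: "f \<in> Dset p l \<Longrightarrow> Dmul p l f (\<lambda>_. 0) = f"
  unfolding Dmul_def using Dset_fix by simp

lemma Dnorm_in: "Dnorm p l f \<in> Dset p l"
  unfolding Dset_def by auto

lemma Dmul_in: "Dmul p l f g \<in> Dset p l"
  unfolding Dmul_def by (rule Dnorm_in)
lemma Dshift_in: "Dshift p l y f \<in> Dset p l"
  unfolding Dshift_def by (rule Dnorm_in)
lemma Dmulpos_in: "Dmulpos p l c f \<in> Dset p l"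
  unfolding Dmulpos_def by (rule Dnorm_in)
lemma zero_in: "(\<lambda>_. 0) \<in> Dset p l"
  using Dnorm_in[of "\<lambda>_. 0"] Dnorm_zero by simp

lemma DPmul_in: "DPmul p l u v \<in> DPset p l"
  using p1 unfolding DPmul_def DPset_def by (auto simp: Dmul_in)

lemma DPone_in: "DPone \<in> DPset p l"
  using p1 unfolding DPone_def DPset_def by (auto simp: zero_in)

lemma DPmul_assoc:
  assumes "u \<in> DPset p l" "v \<in> DPset p l" "w \<in> DPset p l"
  shows "DPmul p l (DPmul p l u v) w = DPmul p l u (DPmul p l v w)"
proof -
  have e: "Dshift p l (- ((snd u + snd v) mod int p)) (fst w) = Dshift p l (- snd u + - snd v) (fst w)"
    by (rule Dshift_cong) (simp add: mod_simps)
  show ?thesis unfolding DPmul_def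
    by (simp add: Dmul_assoc Dshift_Dmul Dshift_Dshift e add.assoc mod_add_left_eq mod_add_right_eq)
qed

lemma DPone_mul: "u \<in> DPset p l \<Longrightarrow> DPmul p l DPone u = u"
  unfolding DPmul_def DPone_def DPset_def by (auto simp: Dshift_0 Dmul_0L)

lemma DPmul_one: "u \<in> DPset p l \<Longrightarrow> DPmul p l u DPone = u"
  unfolding DPmul_def DPone_def DPset_def by (auto simp: Dshift_zero Dmul_0R)

definition "DPinv u = (Dshift p l (snd u) (\<lambda>x. - fst u x), (- snd u) mod int p)"

lemma DPinv_in: "DPinv u \<in> DPset p l"
  using p1 unfolding DPinv_def DPset_def by (auto simp: Dshift_in)

lemma DPinv_mul: "u \<in> DPset p l \<Longrightarrow> DPmul p l (DPinv u) u = DPone"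
proof -
  assume u: "u \<in> DPset p l"
  have e: "Dshift p l (- ((- snd u) mod int p)) (fst u) = Dshift p l (snd u) (fst u)"
    by (rule Dshift_cong) (simp add: mod_simps)
  have z: "Dmul p l (\<lambda>x. - fst u x) (fst u) = (\<lambda>_. 0)"
    unfolding Dmul_def by (simp add: Dnorm_zero)
  show ?thesis unfolding DPmul_def DPinv_def DPone_def
    by (simp add: e Dshift_Dmul[symmetric] z Dshift_zero mod_add_left_eq)
qed

lemma pow_mod_r: "int g0 ^ e mod int p = int g0 ^ (e mod r) mod int p"
proof -
  have "int g0 ^ e = (int g0 ^ r) ^ (e div r) * int g0 ^ (e mod r)"
    by (metis power_add power_mult div_mult_mod_eq mult.commute)
  hence "int g0 ^ e mod int p = (((int g0 ^ r) mod int p) ^ (e div r) mod int p) * int g0 ^ (e mod r) mod int p"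
    by (metis mod_mult_left_eq power_mod)
  also have "\<dots> = int g0 ^ (e mod r) mod int p" using g0r p1 by simp
  finally show ?thesis .
qed

lemma pow_cong: "e mod r = e' mod r \<Longrightarrow> int g0 ^ e mod int p = int g0 ^ e' mod int p"
  using pow_mod_r by metis

lemma Dmulpos_cong: "c mod int p = c' mod int p \<Longrightarrow> Dmulpos p l c f = Dmulpos p l c' f"
  unfolding Dmulpos_def by (metis mod_mult_left_eq)

lemma Dmulpos_comp: "Dmulpos p l c (Dmulpos p l c' f) = Dmulpos p l (c' * c) f"
proof -
  have "Dmulpos p l c (Dmulpos p l c' f) = Dnorm p l (\<lambda>z. f ((c' * ((c * z) mod int p)) mod int p))"
    unfolding Dmulpos_def using Dnorm_idx[of "\<lambda>w. f ((c' * w) mod int p)" "\<lambda>z. c * z"] by simp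
  also have "\<dots> = Dmulpos p l (c' * c) f" unfolding Dmulpos_def
    by (simp add: mod_mult_right_eq mult.assoc)
  finally show ?thesis .
qed

lemma Dmulpos_1: "f \<in> Dset p l \<Longrightarrow> Dmulpos p l 1 f = f"
proof -
  assume f: "f \<in> Dset p l"
  have "Dmulpos p l 1 f = Dnorm p l f" unfolding Dmulpos_def Dnorm_def by (auto simp: fun_eq_iff)
  thus ?thesis using Dset_fix[OF f] by simp
qed

abbreviation "ps \<equiv> psi p l r g0"

lemma psi_in: "ps e u \<in> DPset p l"
  using p1 unfolding psi_def DPset_def by (auto simp: Dmulpos_in)

lemma psi_one: "ps e DPone = DPone"
  unfolding psi_def DPone_def by (simp add: Dmulpos_zero)

lemma psi_0: "u \<in> DPset p l \<Longrightarrow> ps 0 u = u"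
proof -
  assume u: "u \<in> DPset p l"
  have "Dmulpos p l (1 mod int p) (fst u) = Dmulpos p l 1 (fst u)"
    by (rule Dmulpos_cong) simp
  thus ?thesis using u p1 unfolding psi_def DPset_def by (auto simp: Dmulpos_1)
qed

lemma psi_comp: "ps e (ps e' u) = ps (e + e') u"
proof -
  have c: "Dmulpos p l (int g0 ^ ((r - 1) * e') mod int p * (int g0 ^ ((r - 1) * e) mod int p)) (fst u)
     = Dmulpos p l (int g0 ^ ((r - 1) * (e + e')) mod int p) (fst u)"
  proof (rule Dmulpos_cong)
    have "(r - 1) * (e + e') = (r - 1) * e' + (r - 1) * e" by (simp add: add_mult_distrib2)
    thus "int g0 ^ ((r - 1) * e') mod int p * (int g0 ^ ((r - 1) * e) mod int p) mod int p =
      int g0 ^ ((r - 1) * (e + e')) mod int p mod int p" by (simp add: mod_mult_eq power_add)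
  qed
  have d: "int g0 ^ e * (int g0 ^ e' * snd u mod int p) mod int p = int g0 ^ (e + e') * snd u mod int p"
    by (simp add: mod_mult_right_eq power_add mult.assoc)
  show ?thesis unfolding psi_def using c d by (simp add: Dmulpos_comp)
qed

lemma psi_mod: "e mod r = e' mod r \<Longrightarrow> ps e u = ps e' u"
proof -
  assume h: "e mod r = e' mod r"
  have a: "Dmulpos p l (int g0 ^ ((r - 1) * e) mod int p) f = Dmulpos p l (int g0 ^ ((r - 1) * e') mod int p) f" for f
    apply (rule Dmulpos_cong) apply simp apply (rule pow_cong)
    using h by (metis mod_mult_right_eq)
  have b: "int g0 ^ e * y mod int p = int g0 ^ e' * y mod int p" for y
    using pow_cong[OF h] by (metis mod_mult_left_eq)
  show ?thesis unfolding psi_def using a b by simp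
qed

lemma cs1: "(int g0 ^ ((r - 1) * e) mod int p) * int g0 ^ e mod int p = 1"
proof -
  have "(int g0 ^ ((r - 1) * e) mod int p) * int g0 ^ e mod int p = int g0 ^ ((r - 1) * e + e) mod int p"
    by (simp add: mod_mult_left_eq power_add)
  also have "\<dots> = int g0 ^ 0 mod int p"
    apply (rule pow_cong) using r1 by (simp add: algebra_simps)
  finally show ?thesis using p1 by simp
qed

lemma psi_hom:
  assumes u: "u \<in> DPset p l" and v: "v \<in> DPset p l"
  shows "ps e (DPmul p l u v) = DPmul p l (ps e u) (ps e v)"
proof -
  obtain f y where fy: "u = (f, y)" by fastforce
  obtain f' y' where fy': "v = (f', y')" by fastforce
  define c where "c = int g0 ^ ((r - 1) * e) mod int p"
  define s where "s = int g0 ^ e"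
  have cs: "c * s mod int p = 1" unfolding c_def s_def by (rule cs1)
  have idx: "(c * ((z + s * y mod int p) mod int p)) mod int p = ((c * z) mod int p + y) mod int p" for z
  proof -
    have "(c * ((z + s * y mod int p) mod int p)) mod int p = (c * z + (c * s) * y) mod int p"
      by (simp add: mod_mult_right_eq mod_add_right_eq algebra_simps)
    also have "\<dots> = (c * z + ((c * s) mod int p) * y) mod int p"
      by (metis mod_add_right_eq mod_mult_left_eq)
    also have "\<dots> = ((c * z) mod int p + y) mod int p" using cs by (simp add: mod_add_left_eq)
    finally show ?thesis .
  qed
  have L: "fst (ps e (DPmul p l u v)) = Dnorm p l (\<lambda>z. f ((c * z) mod int p) + f' (((c * z) mod int p + y) mod int p))"
    unfolding psi_def DPmul_def fy fy' c_def[symmetric] Dmulpos_def Dmul_def Dshift_def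
    using Dnorm_idx[of "\<lambda>x. f x + Dnorm p l (\<lambda>x. f' ((x - - y) mod int p)) x" "\<lambda>z. c * z"]
    apply simp
    using Dnorm_addR_idx[of "\<lambda>z. f ((c * z) mod int p)" "\<lambda>x. f' ((x + y) mod int p)" "\<lambda>z. c * z"]
    by simp
  have R: "fst (DPmul p l (ps e u) (ps e v)) = Dnorm p l (\<lambda>z. f ((c * z) mod int p) + f' ((c * ((z + s * y mod int p) mod int p)) mod int p))"
    unfolding psi_def DPmul_def fy fy' c_def[symmetric] s_def[symmetric] Dmulpos_def Dmul_def Dshift_def
    apply (simp add: Dnorm_addL Dnorm_addR)
    using Dnorm_addR_idx[of "\<lambda>z. f ((c * z) mod int p)" "\<lambda>w. f' ((c * w) mod int p)" "\<lambda>z. z + s * y mod int p"]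
    by simp
  have S: "snd (ps e (DPmul p l u v)) = snd (DPmul p l (ps e u) (ps e v))"
    unfolding psi_def DPmul_def fy fy' by (simp add: mod_mult_right_eq mod_add_eq distrib_left)
  show ?thesis using L R S idx by (simp add: prod_eq_iff)
qed


end

context GS begin
abbreviation "G \<equiv> Grp p l r g0"

lemma Hmul_in: "Hmul r h h' \<in> Hset r"
  using r1 unfolding Hmul_def Hset_def by (auto split: prod.splits)

lemma Hmul_assoc: "Hmul r (Hmul r h h') h'' = Hmul r h (Hmul r h' h'')"
proof -
  obtain a b c where h: "h = (a,b,c)" by (metis prod_cases3)
  obtain a' b' c' where h': "h' = (a',b',c')" by (metis prod_cases3)
  obtain a'' b'' c'' where h'': "h'' = (a'',b'',c'')" by (metis prod_cases3)
  have 1: "((a + a') mod int r + a'') mod int r = (a + (a' + a'') mod int r) mod int r"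
    by (simp add: mod_add_left_eq mod_add_right_eq add.assoc)
  have 2: "((b + b') mod int r + b'') mod int r = (b + (b' + b'') mod int r) mod int r"
    by (simp add: mod_add_left_eq mod_add_right_eq add.assoc)
  have 3: "((c + c' - a' * b) mod int r + c'' - a'' * ((b + b') mod int r)) mod int r =
           (c + (c' + c'' - a'' * b') mod int r - ((a' + a'') mod int r) * b) mod int r"
    unfolding mod_tA mod_tB by (simp add: algebra_simps)
  show ?thesis unfolding h h' h'' Hmul_def using 1 2 3 by simp
qed

lemma psi_add_mod:
  assumes "0 \<le> a" "a < int r" "0 \<le> a'" "a' < int r"
  shows "ps ((r-1) * nat a) (ps ((r-1) * nat a') k) = ps ((r-1) * nat ((a + a') mod int r)) k"
proof -
  have "nat ((a + a') mod int r) = (nat a + nat a') mod r"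
    using assms by (simp add: nat_mod_distrib nat_add_distrib)
  hence "((r-1) * nat a + (r-1) * nat a') mod r = ((r-1) * nat ((a + a') mod int r)) mod r"
    by (simp add: mod_mult_right_eq add_mult_distrib2)
  hence "ps ((r-1) * nat a + (r-1) * nat a') k = ps ((r-1) * nat ((a + a') mod int r)) k"
    by (rule psi_mod)
  thus ?thesis by (simp add: psi_comp)
qed

lemma Gmul_simp: "Gmul p l r g0 ((n1,n2),(a,b,c)) ((n1',n2'),h') =
   ((DPmul p l n1 (ps ((r - 1) * nat a) n1'), DPmul p l n2 (ps ((r - 1) * nat b) n2')), Hmul r (a,b,c) h')"
  unfolding Gmul_def by simp

lemma G_carrier: "carrier G = (DPset p l \<times> DPset p l) \<times> Hset r"
  unfolding Grp_def Gset_def by simp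

lemma G_mult: "x \<otimes>\<^bsub>G\<^esub> y = Gmul p l r g0 x y"
  unfolding Grp_def by simp

lemma G_one: "\<one>\<^bsub>G\<^esub> = Gone"
  unfolding Grp_def by simp

lemma Gmul_in: "x \<in> carrier G \<Longrightarrow> y \<in> carrier G \<Longrightarrow> Gmul p l r g0 x y \<in> carrier G"
  unfolding G_carrier Gmul_def by (auto simp: DPmul_in Hmul_in split: prod.splits)

lemma Gmul_assoc:
  assumes "x \<in> carrier G" "y \<in> carrier G" "z \<in> carrier G"
  shows "Gmul p l r g0 (Gmul p l r g0 x y) z = Gmul p l r g0 x (Gmul p l r g0 y z)"
proof -
  obtain n1 n2 a b c where x: "x = ((n1,n2),(a,b,c))" by (metis prod.collapse)
  obtain m1 m2 a' b' c' where y: "y = ((m1,m2),(a',b',c'))" by (metis prod.collapse)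
  obtain k1 k2 h'' where z: "z = ((k1,k2),h'')" by (metis prod.collapse)
  have ins: "n1 \<in> DPset p l" "n2 \<in> DPset p l" "m1 \<in> DPset p l" "m2 \<in> DPset p l" "k1 \<in> DPset p l" "k2 \<in> DPset p l"
    and rg: "0 \<le> a" "a < int r" "0 \<le> b" "b < int r" "0 \<le> a'" "a' < int r" "0 \<le> b'" "b' < int r"
    using assms unfolding x y z G_carrier Hset_def by auto
  have e1: "DPmul p l (DPmul p l n1 (ps ((r - 1) * nat a) m1)) (ps ((r - 1) * nat ((a + a') mod int r)) k1)
     = DPmul p l n1 (ps ((r - 1) * nat a) (DPmul p l m1 (ps ((r - 1) * nat a') k1)))"
    using psi_add_mod[OF rg(1,2,5,6), of k1] by (simp add: psi_hom ins psi_in DPmul_assoc)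
  have e2: "DPmul p l (DPmul p l n2 (ps ((r - 1) * nat b) m2)) (ps ((r - 1) * nat ((b + b') mod int r)) k2)
     = DPmul p l n2 (ps ((r - 1) * nat b) (DPmul p l m2 (ps ((r - 1) * nat b') k2)))"
    using psi_add_mod[OF rg(3,4,7,8), of k2] by (simp add: psi_hom ins psi_in DPmul_assoc)
  show ?thesis unfolding x y z Gmul_simp
    using e1 e2 Hmul_assoc[of "(a,b,c)" "(a',b',c')" h'']
    by (simp add: Hmul_def[of r "(a,b,c)" "(a',b',c')"] Gmul_simp)
qed

lemma group_G: "group G"
proof (rule groupI)
  show "x \<otimes>\<^bsub>G\<^esub> y \<in> carrier G" if "x \<in> carrier G" "y \<in> carrier G" for x y
    using that by (simp add: G_mult Gmul_in)
  show "\<one>\<^bsub>G\<^esub> \<in> carrier G"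
    using r1 by (simp add: G_one Gone_def G_carrier DPone_in Hset_def)
  show "x \<otimes>\<^bsub>G\<^esub> y \<otimes>\<^bsub>G\<^esub> z = x \<otimes>\<^bsub>G\<^esub> (y \<otimes>\<^bsub>G\<^esub> z)"
    if "x \<in> carrier G" "y \<in> carrier G" "z \<in> carrier G" for x y z
    using that by (simp add: G_mult Gmul_assoc)
  show "\<one>\<^bsub>G\<^esub> \<otimes>\<^bsub>G\<^esub> x = x" if "x \<in> carrier G" for x
    using that unfolding G_one G_mult Gone_def G_carrier
    by (auto simp: Gmul_simp psi_0 DPone_mul Hmul_def Hset_def)
  show "\<exists>y\<in>carrier G. y \<otimes>\<^bsub>G\<^esub> x = \<one>\<^bsub>G\<^esub>" if "x \<in> carrier G" for x
  proof -
    obtain n1 n2 a b c where x: "x = ((n1,n2),(a,b,c))" by (metis prod.collapse)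
    define a' where "a' = (- a) mod int r"
    define b' where "b' = (- b) mod int r"
    define c' where "c' = (- c - a * b) mod int r"
    define y where "y = ((DPinv (ps ((r - 1) * nat a') n1), DPinv (ps ((r - 1) * nat b') n2)), (a', b', c'))"
    have "y \<in> carrier G" unfolding y_def G_carrier Hset_def a'_def b'_def c'_def
      using r1 by (auto simp: DPinv_in)
    moreover have "y \<otimes>\<^bsub>G\<^esub> x = \<one>\<^bsub>G\<^esub>"
      unfolding y_def x G_mult G_one Gmul_simp Gone_def
      using that unfolding x G_carrier
      by (auto simp: DPinv_mul psi_in Hmul_def a'_def b'_def c'_def mod_tA mod_add_left_eq)
    ultimately show ?thesis by blast
  qed
qed

end


lemma sum_if_eq: "finite S \<Longrightarrow> (\<Sum>h\<in>S. if h = a then f h else 0) = (if a \<in> S then f a else 0)"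
  by (simp add: sum.delta')


locale GA =
  fixes G :: "gelem monoid"
  assumes grp: "group G" and fin: "finite (carrier G)"

sublocale GA \<subseteq> group G by (rule grp)

context GA
begin

lemma cancel1[simp]: "x \<in> carrier G \<Longrightarrow> y \<in> carrier G \<Longrightarrow> inv\<^bsub>G\<^esub> x \<otimes>\<^bsub>G\<^esub> (x \<otimes>\<^bsub>G\<^esub> y) = y"
  by (simp add: m_assoc[symmetric])
lemma cancel2[simp]: "x \<in> carrier G \<Longrightarrow> y \<in> carrier G \<Longrightarrow> x \<otimes>\<^bsub>G\<^esub> (inv\<^bsub>G\<^esub> x \<otimes>\<^bsub>G\<^esub> y) = y"
  by (simp add: m_assoc[symmetric])

lemma conv_alt: "conv G u v x = (if x \<in> carrier G then (\<Sum>g\<in>carrier G. u g * v (inv\<^bsub>G\<^esub> g \<otimes>\<^bsub>G\<^esub> x)) else 0)"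
proof (cases "x \<in> carrier G")
  case True
  have "(\<Sum>h\<in>carrier G. if g \<otimes>\<^bsub>G\<^esub> h = x then u g * v h else 0) = u g * v (inv\<^bsub>G\<^esub> g \<otimes>\<^bsub>G\<^esub> x)"
    if g: "g \<in> carrier G" for g
  proof -
    have "(\<Sum>h\<in>carrier G. if g \<otimes>\<^bsub>G\<^esub> h = x then u g * v h else 0)
       = (\<Sum>h\<in>carrier G. if h = inv\<^bsub>G\<^esub> g \<otimes>\<^bsub>G\<^esub> x then u g * v h else 0)"
      apply (rule sum.cong, simp)
      using g True by (metis inv_solve_left)
    also have "\<dots> = u g * v (inv\<^bsub>G\<^esub> g \<otimes>\<^bsub>G\<^esub> x)" using g True by (simp add: sum_if_eq fin)
    finally show ?thesis .
  qed
  thus ?thesis unfolding conv_def using True by simp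
next
  case False
  thus ?thesis unfolding conv_def by (auto intro!: sum.neutral)
qed

lemma conv_out: "x \<notin> carrier G \<Longrightarrow> conv G u v x = 0"
  by (simp add: conv_alt)

lemma conv_in: "x \<in> carrier G \<Longrightarrow> conv G u v x = (\<Sum>g\<in>carrier G. u g * v (inv\<^bsub>G\<^esub> g \<otimes>\<^bsub>G\<^esub> x))"
  by (simp add: conv_alt)

lemma conv_delta_L: "g \<in> carrier G \<Longrightarrow> conv G (delta g) v x = (if x \<in> carrier G then v (inv\<^bsub>G\<^esub> g \<otimes>\<^bsub>G\<^esub> x) else 0)"
proof -
  assume g: "g \<in> carrier G"
  have "(\<Sum>g'\<in>carrier G. delta g g' * v (inv\<^bsub>G\<^esub> g' \<otimes>\<^bsub>G\<^esub> x))
      = (\<Sum>g'\<in>carrier G. if g' = g then v (inv\<^bsub>G\<^esub> g' \<otimes>\<^bsub>G\<^esub> x) else 0)"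
    by (rule sum.cong) (auto simp: delta_def)
  thus ?thesis using g by (simp add: conv_alt sum_if_eq fin)
qed

lemma conv_delta_R: "g \<in> carrier G \<Longrightarrow> conv G u (delta g) x = (if x \<in> carrier G then u (x \<otimes>\<^bsub>G\<^esub> inv\<^bsub>G\<^esub> g) else 0)"
proof (cases "x \<in> carrier G")
  case True
  assume g: "g \<in> carrier G"
  have "(\<Sum>g'\<in>carrier G. u g' * delta g (inv\<^bsub>G\<^esub> g' \<otimes>\<^bsub>G\<^esub> x)) = (\<Sum>g'\<in>carrier G. if g' = x \<otimes>\<^bsub>G\<^esub> inv\<^bsub>G\<^esub> g then u g' else 0)"
  proof (rule sum.cong)
    fix g' assume g': "g' \<in> carrier G"
    have "(inv\<^bsub>G\<^esub> g' \<otimes>\<^bsub>G\<^esub> x = g) = (g' = x \<otimes>\<^bsub>G\<^esub> inv\<^bsub>G\<^esub> g)"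
      using inv_solve_left[of g g' x] inv_solve_right[of g' x g] g g' True by auto
    thus "u g' * delta g (inv\<^bsub>G\<^esub> g' \<otimes>\<^bsub>G\<^esub> x) = (if g' = x \<otimes>\<^bsub>G\<^esub> inv\<^bsub>G\<^esub> g then u g' else 0)"
      unfolding delta_def by auto
  qed simp
  thus ?thesis using True g by (simp add: conv_alt sum_if_eq fin)
qed (simp add: conv_alt)

lemma conv_assoc: "conv G (conv G u v) w = conv G u (conv G v w)"
proof
  fix x
  show "conv G (conv G u v) w x = conv G u (conv G v w) x"
  proof (cases "x \<in> carrier G")
    case True
    have "conv G (conv G u v) w x = (\<Sum>a\<in>carrier G. (\<Sum>b\<in>carrier G. u b * v (inv\<^bsub>G\<^esub> b \<otimes>\<^bsub>G\<^esub> a)) * w (inv\<^bsub>G\<^esub> a \<otimes>\<^bsub>G\<^esub> x))"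
      using True by (auto simp: conv_in intro!: sum.cong)
    also have "\<dots> = (\<Sum>a\<in>carrier G. \<Sum>b\<in>carrier G. u b * v (inv\<^bsub>G\<^esub> b \<otimes>\<^bsub>G\<^esub> a) * w (inv\<^bsub>G\<^esub> a \<otimes>\<^bsub>G\<^esub> x))"
      by (simp add: sum_distrib_right)
    also have "\<dots> = (\<Sum>b\<in>carrier G. \<Sum>a\<in>carrier G. u b * v (inv\<^bsub>G\<^esub> b \<otimes>\<^bsub>G\<^esub> a) * w (inv\<^bsub>G\<^esub> a \<otimes>\<^bsub>G\<^esub> x))"
      by (rule sum.swap)
    finally have L: "conv G (conv G u v) w x = (\<Sum>b\<in>carrier G. \<Sum>a\<in>carrier G. u b * v (inv\<^bsub>G\<^esub> b \<otimes>\<^bsub>G\<^esub> a) * w (inv\<^bsub>G\<^esub> a \<otimes>\<^bsub>G\<^esub> x))" .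
    have R: "conv G u (conv G v w) x = (\<Sum>b\<in>carrier G. \<Sum>c\<in>carrier G. u b * v c * w (inv\<^bsub>G\<^esub> c \<otimes>\<^bsub>G\<^esub> (inv\<^bsub>G\<^esub> b \<otimes>\<^bsub>G\<^esub> x)))"
      using True by (auto simp: conv_in sum_distrib_left mult.assoc intro!: sum.cong)
    have "(\<Sum>a\<in>carrier G. u b * v (inv\<^bsub>G\<^esub> b \<otimes>\<^bsub>G\<^esub> a) * w (inv\<^bsub>G\<^esub> a \<otimes>\<^bsub>G\<^esub> x))
        = (\<Sum>c\<in>carrier G. u b * v c * w (inv\<^bsub>G\<^esub> c \<otimes>\<^bsub>G\<^esub> (inv\<^bsub>G\<^esub> b \<otimes>\<^bsub>G\<^esub> x)))" if b: "b \<in> carrier G" for b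
      apply (rule sum.reindex_bij_witness[where i = "\<lambda>c. b \<otimes>\<^bsub>G\<^esub> c" and j = "\<lambda>a. inv\<^bsub>G\<^esub> b \<otimes>\<^bsub>G\<^esub> a"])
      using b True by (simp_all add: m_assoc inv_mult_group)
    thus ?thesis using L R by (auto intro!: sum.cong)
  qed (simp add: conv_out)
qed

lemma conjg_apply: "g \<in> carrier G \<Longrightarrow> conjg G u g x = (if x \<in> carrier G then u (g \<otimes>\<^bsub>G\<^esub> x \<otimes>\<^bsub>G\<^esub> inv\<^bsub>G\<^esub> g) else 0)"
  unfolding conjg_def by (simp add: conv_delta_R conv_delta_L m_assoc)

lemma conv_cong: "(\<And>y. y \<in> carrier G \<Longrightarrow> u y = u' y) \<Longrightarrow> (\<And>y. y \<in> carrier G \<Longrightarrow> v y = v' y)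
   \<Longrightarrow> conv G u v = conv G u' v'"
  by (auto simp: fun_eq_iff conv_alt intro!: sum.cong)

lemma conjg_conv: "g \<in> carrier G \<Longrightarrow> conjg G (conv G u v) g = conv G (conjg G u g) (conjg G v g)"
proof
  fix x assume g: "g \<in> carrier G"
  show "conjg G (conv G u v) g x = conv G (conjg G u g) (conjg G v g) x"
  proof (cases "x \<in> carrier G")
    case True
    have "conjg G (conv G u v) g x = (\<Sum>a\<in>carrier G. u a * v (inv\<^bsub>G\<^esub> a \<otimes>\<^bsub>G\<^esub> (g \<otimes>\<^bsub>G\<^esub> x \<otimes>\<^bsub>G\<^esub> inv\<^bsub>G\<^esub> g)))"
      using g True by (simp add: conjg_apply conv_in)
    also have "\<dots> = (\<Sum>a\<in>carrier G. u (g \<otimes>\<^bsub>G\<^esub> a \<otimes>\<^bsub>G\<^esub> inv\<^bsub>G\<^esub> g) * v (g \<otimes>\<^bsub>G\<^esub> (inv\<^bsub>G\<^esub> a \<otimes>\<^bsub>G\<^esub> x) \<otimes>\<^bsub>G\<^esub> inv\<^bsub>G\<^esub> g))"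
      apply (rule sum.reindex_bij_witness[where i = "\<lambda>a. g \<otimes>\<^bsub>G\<^esub> a \<otimes>\<^bsub>G\<^esub> inv\<^bsub>G\<^esub> g" and j = "\<lambda>a. inv\<^bsub>G\<^esub> g \<otimes>\<^bsub>G\<^esub> a \<otimes>\<^bsub>G\<^esub> g"])
      using g True by (simp_all add: m_assoc inv_mult_group)
    also have "\<dots> = conv G (conjg G u g) (conjg G v g) x"
      using g True by (simp add: conjg_apply conv_in)
    finally show ?thesis .
  qed (simp add: conv_out conjg_apply g)
qed

lemma conj_eq:
  assumes "g \<in> carrier G" "x \<in> carrier G" "h \<in> carrier G"
  shows "(g \<otimes>\<^bsub>G\<^esub> x \<otimes>\<^bsub>G\<^esub> inv\<^bsub>G\<^esub> g = h) = (x = inv\<^bsub>G\<^esub> g \<otimes>\<^bsub>G\<^esub> h \<otimes>\<^bsub>G\<^esub> g)"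
proof
  assume e: "g \<otimes>\<^bsub>G\<^esub> x \<otimes>\<^bsub>G\<^esub> inv\<^bsub>G\<^esub> g = h"
  have "x = inv\<^bsub>G\<^esub> g \<otimes>\<^bsub>G\<^esub> (g \<otimes>\<^bsub>G\<^esub> x \<otimes>\<^bsub>G\<^esub> inv\<^bsub>G\<^esub> g) \<otimes>\<^bsub>G\<^esub> g"
    using assms by (simp add: m_assoc)
  thus "x = inv\<^bsub>G\<^esub> g \<otimes>\<^bsub>G\<^esub> h \<otimes>\<^bsub>G\<^esub> g" using e by simp
next
  assume e: "x = inv\<^bsub>G\<^esub> g \<otimes>\<^bsub>G\<^esub> h \<otimes>\<^bsub>G\<^esub> g"
  show "g \<otimes>\<^bsub>G\<^esub> x \<otimes>\<^bsub>G\<^esub> inv\<^bsub>G\<^esub> g = h" unfolding e using assms by (simp add: m_assoc)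
qed

lemma conjg_delta: "g \<in> carrier G \<Longrightarrow> h \<in> carrier G \<Longrightarrow> conjg G (delta h) g = delta (inv\<^bsub>G\<^esub> g \<otimes>\<^bsub>G\<^esub> h \<otimes>\<^bsub>G\<^esub> g)"
proof
  fix x assume g: "g \<in> carrier G" and h: "h \<in> carrier G"
  show "conjg G (delta h) g x = delta (inv\<^bsub>G\<^esub> g \<otimes>\<^bsub>G\<^esub> h \<otimes>\<^bsub>G\<^esub> g) x"
  proof (cases "x \<in> carrier G")
    case True
    thus ?thesis using g h conj_eq[OF g True h] unfolding conjg_apply[OF g] delta_def by simp
  next
    case False
    have "inv\<^bsub>G\<^esub> g \<otimes>\<^bsub>G\<^esub> h \<otimes>\<^bsub>G\<^esub> g \<in> carrier G" using g h by simp
    thus ?thesis using False g unfolding conjg_apply[OF g] delta_def by auto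
  qed
qed

lemma conjg_conjg: "g \<in> carrier G \<Longrightarrow> g' \<in> carrier G \<Longrightarrow> conjg G (conjg G u g) g' = conjg G u (g \<otimes>\<^bsub>G\<^esub> g')"
  by (auto simp: fun_eq_iff conjg_apply m_assoc inv_mult_group)

lemma conjg_one: "conjg G u \<one>\<^bsub>G\<^esub> x = (if x \<in> carrier G then u x else 0)"
  by (simp add: conjg_apply)

lemma delta_mul: "a \<in> carrier G \<Longrightarrow> b \<in> carrier G \<Longrightarrow> conv G (delta a) (delta b) = delta (a \<otimes>\<^bsub>G\<^esub> b)"
proof
  fix x assume a: "a \<in> carrier G" and b: "b \<in> carrier G"
  show "conv G (delta a) (delta b) x = delta (a \<otimes>\<^bsub>G\<^esub> b) x"
  proof (cases "x \<in> carrier G")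
    case True
    hence "conv G (delta a) (delta b) x = delta b (inv\<^bsub>G\<^esub> a \<otimes>\<^bsub>G\<^esub> x)" by (subst conv_delta_L[OF a]) (simp add: True)
    thus ?thesis using a b True inv_solve_left[of b a x] unfolding delta_def by auto
  next
    case False
    hence "conv G (delta a) (delta b) x = 0" by (subst conv_delta_L[OF a]) simp
    thus ?thesis using a b False unfolding delta_def by auto
  qed
qed

end

context GA begin

lemma conv_smultL: "conv G (\<lambda>x. c * u x) v = (\<lambda>x. c * conv G u v x)"
  by (simp add: fun_eq_iff conv_alt sum_distrib_left mult.assoc)

lemma conv_smultR: "conv G u (\<lambda>x. c * v x) = (\<lambda>x. c * conv G u v x)"
  by (simp add: fun_eq_iff conv_alt sum_distrib_left mult.left_commute)

lemma conv_addL: "conv G (\<lambda>x. u x + u' x) v = (\<lambda>x. conv G u v x + conv G u' v x)"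
  by (simp add: fun_eq_iff conv_alt sum.distrib distrib_right)

lemma conv_addR: "conv G u (\<lambda>x. v x + v' x) = (\<lambda>x. conv G u v x + conv G u v' x)"
  by (simp add: fun_eq_iff conv_alt sum.distrib distrib_left)

lemma conv_sumL: "conv G (\<lambda>x. \<Sum>i\<in>I. f i x) v = (\<lambda>x. \<Sum>i\<in>I. conv G (f i) v x)"
proof
  fix x show "conv G (\<lambda>x. \<Sum>i\<in>I. f i x) v x = (\<Sum>i\<in>I. conv G (f i) v x)"
    by (cases "x \<in> carrier G") (simp_all add: conv_alt sum_distrib_right sum.swap[of _ I])
qed

lemma conv_sumR: "conv G u (\<lambda>x. \<Sum>i\<in>I. f i x) = (\<lambda>x. \<Sum>i\<in>I. conv G u (f i) x)"
proof
  fix x show "conv G u (\<lambda>x. \<Sum>i\<in>I. f i x) x = (\<Sum>i\<in>I. conv G u (f i) x)"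
    by (cases "x \<in> carrier G") (simp_all add: conv_alt sum_distrib_left sum.swap[of _ I])
qed

lemma conjg_smult: "g \<in> carrier G \<Longrightarrow> conjg G (\<lambda>x. c * u x) g = (\<lambda>x. c * conjg G u g x)"
  by (simp add: fun_eq_iff conjg_apply)

lemma conjg_add: "g \<in> carrier G \<Longrightarrow> conjg G (\<lambda>x. u x + v x) g = (\<lambda>x. conjg G u g x + conjg G v g x)"
  by (simp add: fun_eq_iff conjg_apply)

lemma conjg_sum: "g \<in> carrier G \<Longrightarrow> conjg G (\<lambda>x. \<Sum>i\<in>I. f i x) g = (\<lambda>x. \<Sum>i\<in>I. conjg G (f i) g x)"
  by (simp add: fun_eq_iff conjg_apply)

lemma conjg_lin: "g \<in> carrier G \<Longrightarrow>
   conjg G (\<lambda>x. c * (\<Sum>s\<in>S. f s * w s x)) g = (\<lambda>x. c * (\<Sum>s\<in>S. f s * conjg G (w s) g x))"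
  by (simp add: fun_eq_iff conjg_apply sum_distrib_left)

lemma conjg_support: "g \<in> carrier G \<Longrightarrow> conjg G u g x \<noteq> 0 \<Longrightarrow> x \<in> carrier G \<and> u (g \<otimes>\<^bsub>G\<^esub> x \<otimes>\<^bsub>G\<^esub> inv\<^bsub>G\<^esub> g) \<noteq> 0"
  by (simp add: conjg_apply split: if_splits)

end


lemma nm1: "(- ((a::int) mod n * b)) mod n = (- (a * b)) mod n"
  by (metis mod_minus_eq mod_mult_left_eq)
lemma nm2: "(- ((a::int) * (b mod n))) mod n = (- (a * b)) mod n"
  by (metis mod_minus_eq mod_mult_right_eq)

context GS begin

lemma Dset_sub: "Dset p l \<subseteq> (\<lambda>g x. if 0 \<le> x \<and> x < int p then g x else 0) ` ({0..<int p} \<rightarrow>\<^sub>E {0..<int l})"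
proof
  fix f assume "f \<in> Dset p l"
  then obtain g where f: "f = Dnorm p l g" unfolding Dset_def by auto
  let ?h = "restrict (\<lambda>x. (g x - g 0) mod int l) {0..<int p}"
  have "?h \<in> {0..<int p} \<rightarrow>\<^sub>E {0..<int l}" using l1 by auto
  moreover have "f = (\<lambda>x. if 0 \<le> x \<and> x < int p then ?h x else 0)" unfolding f Dnorm_def by auto
  ultimately show "f \<in> (\<lambda>g x. if 0 \<le> x \<and> x < int p then g x else 0) ` ({0..<int p} \<rightarrow>\<^sub>E {0..<int l})" by blast
qed

lemma finite_Dset: "finite (Dset p l)"
  by (rule finite_subset[OF Dset_sub]) (auto intro!: finite_PiE)

lemma finite_G: "finite (carrier G)"
  unfolding G_carrier DPset_def Hset_def using finite_Dset by auto

lemma GA_G: "GA G"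
  using group_G finite_G by (simp add: GA_def)

definition hel :: "helem \<Rightarrow> gelem" where "hel h = ((DPone, DPone), h)"

lemma hel_mul: "hel h \<otimes>\<^bsub>G\<^esub> hel h' = hel (Hmul r h h')"
proof -
  obtain a b c where h: "h = (a,b,c)" by (metis prod_cases3)
  show ?thesis unfolding hel_def h G_mult Gmul_simp by (simp add: psi_one DPone_mul DPone_in)
qed

lemma hel_in: "h \<in> Hset r \<Longrightarrow> hel h \<in> carrier G"
  unfolding hel_def G_carrier by (simp add: DPone_in)

definition "Hinv h = (case h of (a,b,c) \<Rightarrow> ((- a) mod int r, (- b) mod int r, (- c - a * b) mod int r))"

lemma Hinv_in: "Hinv h \<in> Hset r"
  using r1 unfolding Hinv_def Hset_def by (auto split: prod.splits)

lemma hel_inv: "h \<in> Hset r \<Longrightarrow> inv\<^bsub>G\<^esub> (hel h) = hel (Hinv h)"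
proof -
  assume h: "h \<in> Hset r"
  have "hel (Hinv h) \<otimes>\<^bsub>G\<^esub> hel h = \<one>\<^bsub>G\<^esub>"
    unfolding hel_mul unfolding G_one Gone_def hel_def
    by (auto simp: Hmul_def Hinv_def mod_tA mod_add_left_eq split: prod.splits)
  thus ?thesis using group.inv_equality[OF group_G] hel_in[OF h] hel_in[OF Hinv_in] by blast
qed

definition "lam i t = hel (if i = 1 then (t, 0, 0) else (0, t, 0))"
definition "zel t = hel (0, 0, t)"

lemma Lsub_eq: "Lsub r i = lam i ` {0..<int r}"
  unfolding Lsub_def lam_def hel_def by (auto simp: if_distrib)

lemma Zsub_eq: "Zsub r = zel ` {0..<int r}"
  unfolding Zsub_def zel_def hel_def by auto

definition sg :: "nat \<Rightarrow> int" where "sg i = (if i = 1 then -1 else 1)"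

lemma lam_in: "0 \<le> t \<Longrightarrow> t < int r \<Longrightarrow> lam i t \<in> carrier G"
  unfolding lam_def using r1 by (auto intro!: hel_in simp: Hset_def)

lemma zel_in: "0 \<le> t \<Longrightarrow> t < int r \<Longrightarrow> zel t \<in> carrier G"
  unfolding zel_def using r1 by (auto intro!: hel_in simp: Hset_def)

lemma lam_mul: "0 \<le> t \<Longrightarrow> t < int r \<Longrightarrow> 0 \<le> t' \<Longrightarrow> t' < int r \<Longrightarrow>
   lam i t \<otimes>\<^bsub>G\<^esub> lam i t' = lam i ((t + t') mod int r)"
  unfolding lam_def hel_mul by (auto simp: Hmul_def)

lemma zel_mul: "0 \<le> t \<Longrightarrow> t < int r \<Longrightarrow> 0 \<le> t' \<Longrightarrow> t' < int r \<Longrightarrow>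
   zel t \<otimes>\<^bsub>G\<^esub> zel t' = zel ((t + t') mod int r)"
  unfolding zel_def hel_mul by (auto simp: Hmul_def)

lemma lam_inv: "0 \<le> t \<Longrightarrow> t < int r \<Longrightarrow> inv\<^bsub>G\<^esub> (lam i t) = lam i ((- t) mod int r)"
  unfolding lam_def using r1 by (auto simp: hel_inv Hset_def Hinv_def)

lemma zel_inv: "0 \<le> t \<Longrightarrow> t < int r \<Longrightarrow> inv\<^bsub>G\<^esub> (zel t) = zel ((- t) mod int r)"
  unfolding zel_def using r1 by (auto simp: hel_inv Hset_def Hinv_def)

lemma commut_lam:
  assumes i: "i \<in> {1,2}" and s: "0 \<le> s" "s < int r" and t: "0 \<le> t" "t < int r"
  shows "commut G (lam (3 - i) s) (lam i t) = zel ((sg i * s * t) mod int r)"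
  using i s t r1 unfolding commut_def lam_def zel_def sg_def
  by (auto simp: hel_inv Hset_def hel_mul Hinv_def Hmul_def mod_add_left_eq mod_add_right_eq nm1 nm2 mod_mult_right_eq mult.commute)

lemma conj_lam:
  assumes i: "i \<in> {1,2}" and s: "0 \<le> s" "s < int r" and t: "0 \<le> t" "t < int r"
  shows "inv\<^bsub>G\<^esub> (lam (3 - i) s) \<otimes>\<^bsub>G\<^esub> inv\<^bsub>G\<^esub> (lam i t) \<otimes>\<^bsub>G\<^esub> lam (3 - i) s \<otimes>\<^bsub>G\<^esub> lam i t
     = zel ((sg i * s * t) mod int r)"
  using i s t r1 unfolding commut_def lam_def zel_def sg_def
  by (auto simp: hel_inv Hset_def hel_mul Hinv_def Hmul_def mod_add_left_eq mod_add_right_eq nm1 nm2 mod_mult_right_eq mult.commute)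

lemma zel_central:
  assumes c: "0 \<le> c" "c < int r" and x: "x \<in> carrier G"
  shows "zel c \<otimes>\<^bsub>G\<^esub> x = x \<otimes>\<^bsub>G\<^esub> zel c"
proof -
  obtain n1 n2 a b d where xx: "x = ((n1,n2),(a,b,d))" by (metis prod.collapse)
  have ins: "n1 \<in> DPset p l" "n2 \<in> DPset p l" "0 \<le> a" "a < int r" "0 \<le> b" "b < int r" "0 \<le> d" "d < int r"
    using x unfolding xx G_carrier Hset_def by auto
  show ?thesis unfolding xx zel_def hel_def G_mult Gmul_simp
    using ins by (simp add: psi_0 psi_one DPone_mul DPmul_one Hmul_def add.commute)
qed

lemma conj_E:
  assumes i: "i \<in> {1,2}" and u: "u \<in> DPset p l" and t: "0 \<le> t" "t < int r"
  shows "inv\<^bsub>G\<^esub> (lam i t) \<otimes>\<^bsub>G\<^esub> embDP i u \<otimes>\<^bsub>G\<^esub> lam i t \<in> embDP i ` DPset p l"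
proof -
  define t' where "t' = (- t) mod int r"
  have t': "0 \<le> t'" "t' < int r" unfolding t'_def using r1 by auto
  have "inv\<^bsub>G\<^esub> (lam i t) \<otimes>\<^bsub>G\<^esub> embDP i u \<otimes>\<^bsub>G\<^esub> lam i t = embDP i (ps ((r - 1) * nat t') u)"
    unfolding lam_inv[OF t] t'_def[symmetric]
    using i t t' u unfolding lam_def hel_def embDP_def G_mult
    by (auto simp: Gmul_simp psi_0 psi_one DPone_mul DPmul_one psi_in DPone_in Hmul_def t'_def mod_add_left_eq)
  thus ?thesis using psi_in by auto
qed

end


locale MS = GS p l r g0 for p l r g0 +
  fixes \<theta> :: "gelem \<Rightarrow> 'k::field" and i :: nat
  assumes th_hom: "\<forall>x\<in>Zsub r. \<forall>y\<in>Zsub r. \<theta> (x \<otimes>\<^bsub>Grp p l r g0\<^esub> y) = \<theta> x * \<theta> y"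
    and th_nz: "\<forall>x\<in>Zsub r. \<theta> x \<noteq> 0"
    and th_inj: "inj_on \<theta> (Zsub r)"
    and i12: "i \<in> {1, 2}"
    and rnz: "(of_nat r :: 'k) \<noteq> 0"

sublocale MS \<subseteq> GA "Grp p l r g0" by (rule GA_G)

context MS begin

definition "zeta = \<theta> (zel 1)"
definition "Zp x = zeta ^ nat (x mod int r)"

lemma zel_Z: "0 \<le> u \<Longrightarrow> u < int r \<Longrightarrow> zel u \<in> Zsub r"
  unfolding Zsub_eq by auto

lemma th_mul: "0 \<le> u \<Longrightarrow> u < int r \<Longrightarrow> 0 \<le> v \<Longrightarrow> v < int r \<Longrightarrow>
   \<theta> (zel ((u + v) mod int r)) = \<theta> (zel u) * \<theta> (zel v)"
  using th_hom zel_Z zel_mul by metis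

lemma th_one: "\<theta> (zel 0) = 1"
proof -
  have "\<theta> (zel 0) = \<theta> (zel 0) * \<theta> (zel 0)" using th_mul[of 0 0] r1 by simp
  moreover have "\<theta> (zel 0) \<noteq> 0" using th_nz zel_Z[of 0] r1 by auto
  ultimately show ?thesis by simp
qed

lemma th_zel: "0 \<le> u \<Longrightarrow> u < int r \<Longrightarrow> \<theta> (zel u) = zeta ^ nat u"
proof (induction "nat u" arbitrary: u)
  case 0 thus ?case using th_one by simp
next
  case (Suc n)
  hence u: "u = int n + 1" by simp
  have "\<theta> (zel u) = \<theta> (zel ((int n + 1) mod int r))" using Suc.prems u by simp
  also have "\<dots> = \<theta> (zel (int n)) * \<theta> (zel 1)" using Suc.prems u by (intro th_mul) auto
  also have "\<dots> = zeta ^ n * zeta" using Suc.hyps(1)[of "int n"] Suc.prems u unfolding zeta_def by simp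
  finally show ?case using Suc.hyps(2) by (metis power_Suc2)
qed

lemma zeta_r: "zeta ^ r = 1"
proof -
  have rr: "r = Suc (r - 1)" using r1 by simp
  have "zeta ^ r = zeta ^ (r - 1) * zeta" by (subst rr) (simp only: power_Suc2 diff_Suc_1)
  also have "\<dots> = \<theta> (zel (int r - 1)) * \<theta> (zel 1)" using th_zel[of "int r - 1"] r1 zeta_def
    by (simp add: nat_diff_distrib')
  also have "\<dots> = \<theta> (zel ((int r - 1 + 1) mod int r))" using r1 by (intro th_mul[symmetric]) auto
  also have "\<dots> = 1" using th_one by simp
  finally show ?thesis .
qed

lemma zeta_pow_mod: "zeta ^ n = zeta ^ (n mod r)"
proof -
  have "zeta ^ n = zeta ^ (r * (n div r) + n mod r)" by simp
  also have "\<dots> = (zeta ^ r) ^ (n div r) * zeta ^ (n mod r)" by (simp only: power_add power_mult)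
  finally show ?thesis using zeta_r by simp
qed

lemma zeta_nz: "zeta \<noteq> 0"
  unfolding zeta_def using th_nz zel_Z[of 1] r1 by auto

lemma th_zel_mod: "\<theta> (zel (x mod int r)) = Zp x"
  unfolding Zp_def using r1 by (intro th_zel) auto

lemma Zp_cong: "x mod int r = y mod int r \<Longrightarrow> Zp x = Zp y"
  unfolding Zp_def by simp

lemma Zp_add: "Zp (x + y) = Zp x * Zp y"
proof -
  have "Zp x * Zp y = zeta ^ (nat (x mod int r) + nat (y mod int r))" unfolding Zp_def by (simp add: power_add)
  also have "\<dots> = zeta ^ ((nat (x mod int r) + nat (y mod int r)) mod r)" by (rule zeta_pow_mod)
  also have "(nat (x mod int r) + nat (y mod int r)) mod r = nat ((x + y) mod int r)"
  proof -
    have "(nat (x mod int r) + nat (y mod int r)) mod r = nat (x mod int r + y mod int r) mod r"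
      using r1 by (simp add: nat_add_distrib)
    also have "\<dots> = nat ((x mod int r + y mod int r) mod int r)"
      using r1 by (simp add: nat_mod_distrib)
    finally show ?thesis by (simp add: mod_add_eq)
  qed
  finally show ?thesis unfolding Zp_def by simp
qed

lemma Zp_nz: "Zp x \<noteq> 0"
  unfolding Zp_def using zeta_nz by simp

lemma Zp_0: "Zp 0 = 1"
  unfolding Zp_def by simp

lemma Zp_1_iff: "Zp x = 1 \<longleftrightarrow> int r dvd x"
proof
  assume "Zp x = 1"
  hence "\<theta> (zel (x mod int r)) = \<theta> (zel 0)" using th_zel_mod th_one by simp
  hence "zel (x mod int r) = zel 0" using th_inj zel_Z[of "x mod int r"] zel_Z[of 0] r1
    by (auto dest: inj_onD)
  hence "x mod int r = 0" unfolding zel_def hel_def by simp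
  thus "int r dvd x" by auto
next
  assume "int r dvd x" thus "Zp x = 1" unfolding Zp_def by simp
qed

lemma Zp_mult_nat: "Zp (x * int n) = Zp x ^ n"
proof (induction n)
  case 0 thus ?case by (simp add: Zp_0)
next
  case (Suc n)
  have "Zp (x * int (Suc n)) = Zp (x * int n + x)" by (simp add: algebra_simps)
  thus ?case using Suc by (simp add: Zp_add)
qed

lemma geo: "(\<Sum>t\<in>{0..<int r}. Zp (x * t)) = (if int r dvd x then of_nat r else 0)"
proof -
  have "(\<Sum>t\<in>{0..<int r}. Zp (x * t)) = (\<Sum>n\<in>{0..<r}. Zp (x * int n))"
    by (rule sum.reindex_bij_witness[where i = int and j = nat]) auto
  also have "\<dots> = (\<Sum>n<r. Zp x ^ n)" by (simp add: Zp_mult_nat lessThan_atLeast0)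
  also have "\<dots> = (if int r dvd x then of_nat r else 0)"
  proof (cases "int r dvd x")
    case True
    hence "Zp x = 1" using Zp_1_iff by simp
    thus ?thesis using True by simp
  next
    case False
    have "Zp x ^ r = 1" using Zp_mult_nat[of x r, symmetric] Zp_1_iff by simp
    thus ?thesis using False Zp_1_iff by (simp add: sum_gp_strict)
  qed
  finally show ?thesis .
qed

end


context MS begin

lemma lam_inj: "lam k t = lam k t' \<Longrightarrow> t = t'"
  unfolding lam_def hel_def by (auto split: if_splits)

lemma zel_inj: "zel t = zel t' \<Longrightarrow> t = t'"
  unfolding zel_def hel_def by auto

lemma card_L: "card (Lsub r k) = r"
  unfolding Lsub_eq by (subst card_image) (auto intro: inj_onI lam_inj)

lemma card_Z: "card (Zsub r) = r"
  unfolding Zsub_eq by (subst card_image) (auto intro: inj_onI zel_inj)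

lemma sg_sq: "sg i * sg i = 1"
  unfolding sg_def by simp

lemma Zp_eq_dvd: "Zp x = Zp y \<Longrightarrow> int r dvd (x - y)"
proof -
  assume e: "Zp x = Zp y"
  have "Zp (x - y) * Zp y = Zp x" using Zp_add[of "x - y" y] by simp
  hence "Zp (x - y) = 1" using e Zp_nz[of y] by simp
  thus ?thesis using Zp_1_iff by simp
qed

lemma Zp_zeta: "Zp (int n) = zeta ^ n"
  unfolding Zp_def using zeta_pow_mod[of n] by (simp add: nat_mod_distrib)

lemma zeta_pow_1: "n < r \<Longrightarrow> zeta ^ n = 1 \<Longrightarrow> n = 0"
  using Zp_1_iff[of "int n"] Zp_zeta[of n] by (auto dest: zdvd_imp_le)

lemma pow_swap: "((x::'a::monoid_mult) ^ m) ^ n = (x ^ n) ^ m"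
  by (simp add: power_mult[symmetric] mult.commute)

lemma inv_zeta_r: "(inverse zeta ^ m) ^ r = 1"
  by (subst pow_swap) (simp add: power_inverse zeta_r)

lemma root_is_zeta_pow:
  assumes w: "w ^ r = 1"
  shows "\<exists>m<r. w = zeta ^ m"
proof (rule ccontr)
  assume H: "\<not> (\<exists>m<r. w = zeta ^ m)"
  let ?S = "\<Sum>m<r. \<Sum>n<r. (w * inverse zeta ^ m) ^ n"
  have inner0: "(\<Sum>n<r. (w * inverse zeta ^ m) ^ n) = 0" if m: "m < r" for m
  proof -
    have ne: "w * inverse zeta ^ m \<noteq> 1"
    proof
      assume e: "w * inverse zeta ^ m = 1"
      have "inverse zeta ^ m * zeta ^ m = 1" using zeta_nz by (simp add: power_inverse)
      hence "w = (w * inverse zeta ^ m) * zeta ^ m" by (simp add: mult.assoc)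
      hence "w = zeta ^ m" using e by simp
      thus False using H m by auto
    qed
    have "(w * inverse zeta ^ m) ^ r = w ^ r * (inverse zeta ^ m) ^ r"
      by (rule power_mult_distrib)
    hence "(w * inverse zeta ^ m) ^ r = 1" using w inv_zeta_r by simp
    thus ?thesis using ne by (simp add: sum_gp_strict)
  qed
  have S0: "?S = 0" using inner0 by simp
  have inner: "(\<Sum>m<r. (inverse zeta ^ n) ^ m) = (if n = 0 then of_nat r else 0)" if n: "n < r" for n
  proof (cases "n = 0")
    case False
    have ne: "inverse zeta ^ n \<noteq> 1"
    proof
      assume "inverse zeta ^ n = 1"
      hence "zeta ^ n = 1" by (simp add: power_inverse)
      thus False using zeta_pow_1 n False by auto
    qed
    have "(inverse zeta ^ n) ^ r = 1" by (rule inv_zeta_r)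
    thus ?thesis using ne False by (simp add: sum_gp_strict)
  qed simp
  have "?S = (\<Sum>n<r. \<Sum>m<r. (w * inverse zeta ^ m) ^ n)" by (rule sum.swap)
  also have "\<dots> = (\<Sum>n<r. w ^ n * (\<Sum>m<r. (inverse zeta ^ n) ^ m))"
    by (simp add: power_mult_distrib pow_swap sum_distrib_left)
  also have "\<dots> = (\<Sum>n<r. w ^ n * (if n = 0 then of_nat r else 0))"
    by (rule sum.cong) (simp_all add: inner)
  also have "\<dots> = (\<Sum>n<r. if n = 0 then of_nat r else 0)"
    by (rule sum.cong) simp_all
  also have "\<dots> = of_nat r" using r1 by (simp add: sum.delta)
  finally show False using S0 rnz by simp
qed

lemma Irr_mul: "\<chi> \<in> Irr G S \<Longrightarrow> x \<in> S \<Longrightarrow> y \<in> S \<Longrightarrow> \<chi> (x \<otimes>\<^bsub>G\<^esub> y) = \<chi> x * \<chi> y"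
  unfolding Irr_def by blast

lemma Irr_nz: "\<chi> \<in> Irr G S \<Longrightarrow> x \<in> S \<Longrightarrow> \<chi> x \<noteq> 0"
  unfolding Irr_def by blast

lemma Irr_out: "\<chi> \<in> Irr G S \<Longrightarrow> x \<notin> S \<Longrightarrow> \<chi> x = 0"
  unfolding Irr_def by blast

lemma Irr_one: "\<chi> \<in> Irr G (Lsub r i) \<Longrightarrow> \<chi> (lam i 0) = 1"
proof -
  assume c: "\<chi> \<in> Irr G (Lsub r i)"
  have m: "lam i 0 \<in> Lsub r i" using r1 unfolding Lsub_eq by auto
  have "lam i 0 \<otimes>\<^bsub>G\<^esub> lam i 0 = lam i 0" using lam_mul[of 0 0] r1 by simp
  hence "\<chi> (lam i 0) = \<chi> (lam i 0) * \<chi> (lam i 0)" using Irr_mul[OF c m m] by simp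
  moreover have "\<chi> (lam i 0) \<noteq> 0" using Irr_nz[OF c m] .
  ultimately show ?thesis by simp
qed

lemma Irr_pow:
  assumes c: "\<chi> \<in> Irr G (Lsub r i)"
  shows "0 \<le> t \<Longrightarrow> t < int r \<Longrightarrow> \<chi> (lam i t) = \<chi> (lam i 1) ^ nat t"
proof (induction "nat t" arbitrary: t)
  case 0 thus ?case using Irr_one[OF c] by simp
next
  case (Suc n)
  hence u: "t = int n + 1" by simp
  have mem: "lam i (int n) \<in> Lsub r i" "lam i 1 \<in> Lsub r i" using Suc.prems u r1 unfolding Lsub_eq by auto
  have "lam i t = lam i (int n) \<otimes>\<^bsub>G\<^esub> lam i 1" using lam_mul[of "int n" 1 i] Suc.prems u by simp
  hence "\<chi> (lam i t) = \<chi> (lam i (int n)) * \<chi> (lam i 1)" using Irr_mul[OF c mem] by simp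
  also have "\<dots> = \<chi> (lam i 1) ^ n * \<chi> (lam i 1)" using Suc.hyps(1)[of "int n"] Suc.prems u by simp
  finally show ?case using Suc.hyps(2) by (metis power_Suc2)
qed

lemma Irr_form:
  assumes c: "\<chi> \<in> Irr G (Lsub r i)"
  shows "\<exists>m. \<forall>t. 0 \<le> t \<and> t < int r \<longrightarrow> \<chi> (lam i t) = Zp (m * t)"
proof -
  let ?w = "\<chi> (lam i 1)"
  have mem: "lam i (int r - 1) \<in> Lsub r i" "lam i 1 \<in> Lsub r i" using r1 unfolding Lsub_eq by auto
  have "lam i (int r - 1) \<otimes>\<^bsub>G\<^esub> lam i 1 = lam i 0" using lam_mul[of "int r - 1" 1 i] r1 by simp
  hence "\<chi> (lam i 0) = \<chi> (lam i (int r - 1)) * ?w" using Irr_mul[OF c mem] by simp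
  hence "1 = ?w ^ (r - 1) * ?w" using Irr_one[OF c] Irr_pow[OF c, of "int r - 1"] r1 by (simp add: nat_diff_distrib')
  moreover have rr: "r = Suc (r - 1)" using r1 by simp
  ultimately have "?w ^ r = 1" by (metis power_Suc2)
  then obtain m where m: "?w = zeta ^ m" using root_is_zeta_pow by blast
  have "\<chi> (lam i t) = Zp (int m * t)" if "0 \<le> t" "t < int r" for t
  proof -
    have "\<chi> (lam i t) = zeta ^ (m * nat t)" using Irr_pow[OF c that] m by (simp add: power_mult)
    also have "\<dots> = Zp (int (m * nat t))" by (simp only: Zp_zeta)
    also have "int (m * nat t) = int m * t" using that by simp
    finally show ?thesis .
  qed
  thus ?thesis by blast
qed

end


context MS begin

lemma commut_Zp: "0 \<le> s \<Longrightarrow> s < int r \<Longrightarrow> 0 \<le> t \<Longrightarrow> t < int r \<Longrightarrow>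
  \<theta> (commut G (lam (3 - i) s) (lam i t)) = Zp (sg i * s * t)"
  using commut_lam[OF i12] th_zel_mod by simp

lemma range_dvd_eq: "0 \<le> s \<Longrightarrow> s < int r \<Longrightarrow> 0 \<le> s0 \<Longrightarrow> s0 < int r \<Longrightarrow> int r dvd (s - s0) \<Longrightarrow> s = s0"
proof -
  assume a: "0 \<le> s" "s < int r" "0 \<le> s0" "s0 < int r" "int r dvd (s - s0)"
  hence "s mod int r = s0 mod int r" using mod_eq_dvd_iff by blast
  thus ?thesis using a by simp
qed

lemma sg_dvd: "int r dvd (sg i * x) \<Longrightarrow> int r dvd x"
  unfolding sg_def by (auto split: if_splits)

lemma hchi_eq:
  assumes s0: "0 \<le> s0" "s0 < int r"
    and vals: "\<And>t. 0 \<le> t \<Longrightarrow> t < int r \<Longrightarrow> \<chi> (lam i t) = Zp (sg i * s0 * t)"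
  shows "hchi p l r g0 \<theta> i \<chi> = lam (3 - i) s0"
  unfolding hchi_def
proof (rule the1_equality)
  let ?P = "\<lambda>h. h \<in> Lsub r (3 - i) \<and> (\<forall>g\<in>Lsub r i. \<chi> g = \<theta> (commut G h g))"
  have Pa: "?P (lam (3 - i) s0)"
    using s0 vals commut_Zp unfolding Lsub_eq by auto
  moreover have "h = lam (3 - i) s0" if P: "?P h" for h
  proof -
    obtain s where s: "0 \<le> s" "s < int r" "h = lam (3 - i) s" using P unfolding Lsub_eq by auto
    have "lam i 1 \<in> Lsub r i" using r1 unfolding Lsub_eq by auto
    hence "\<chi> (lam i 1) = \<theta> (commut G h (lam i 1))" using P by blast
    hence "Zp (sg i * s0 * 1) = Zp (sg i * s * 1)" using vals[of 1] commut_Zp[of s 1] s r1 by simp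
    hence "int r dvd (sg i * (s - s0))" using Zp_eq_dvd by (metis mult.right_neutral right_diff_distrib)
    hence "s = s0" using s s0 sg_dvd range_dvd_eq by blast
    thus ?thesis using s by simp
  qed
  ultimately show "\<exists>!h. ?P h" by blast
  show "?P (lam (3 - i) s0)" by (fact Pa)
qed

definition "chis s = (\<lambda>y. if y \<in> Lsub r i then \<theta> (commut G (lam (3 - i) s) y) else 0)"

lemma chis_val: "0 \<le> s \<Longrightarrow> s < int r \<Longrightarrow> 0 \<le> t \<Longrightarrow> t < int r \<Longrightarrow> chis s (lam i t) = Zp (sg i * s * t)"
  unfolding chis_def Lsub_eq using commut_Zp by auto

lemma chis_Irr: "0 \<le> s \<Longrightarrow> s < int r \<Longrightarrow> chis s \<in> Irr G (Lsub r i)"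
proof -
  assume s: "0 \<le> s" "s < int r"
  have "chis s (x \<otimes>\<^bsub>G\<^esub> y) = chis s x * chis s y" if xy: "x \<in> Lsub r i" "y \<in> Lsub r i" for x y
  proof -
    obtain t t' where t: "0 \<le> t" "t < int r" "x = lam i t" "0 \<le> t'" "t' < int r" "y = lam i t'"
      using xy unfolding Lsub_eq by auto
    have m: "x \<otimes>\<^bsub>G\<^esub> y = lam i ((t + t') mod int r)" using lam_mul t by simp
    have "Zp (sg i * s * ((t + t') mod int r)) = Zp (sg i * s * t + sg i * s * t')"
      by (rule Zp_cong) (simp add: mod_mult_right_eq distrib_left)
    thus ?thesis unfolding m using t s r1 by (simp add: chis_val Zp_add)
  qed
  moreover have "chis s x \<noteq> 0" if "x \<in> Lsub r i" for x
    using that s unfolding Lsub_eq by (auto simp: chis_val Zp_nz)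
  moreover have "chis s x = 0" if "x \<notin> Lsub r i" for x
    using that unfolding chis_def by simp
  ultimately show ?thesis unfolding Irr_def by blast
qed

lemma Irr_hchi:
  assumes c: "\<chi> \<in> Irr G (Lsub r i)"
  shows "\<exists>s0. 0 \<le> s0 \<and> s0 < int r \<and> hchi p l r g0 \<theta> i \<chi> = lam (3 - i) s0
     \<and> (\<forall>t. 0 \<le> t \<and> t < int r \<longrightarrow> \<chi> (lam i t) = Zp (sg i * s0 * t))"
proof -
  obtain m where m: "\<And>t. 0 \<le> t \<Longrightarrow> t < int r \<Longrightarrow> \<chi> (lam i t) = Zp (m * t)" using Irr_form[OF c] by blast
  define s0 where "s0 = (sg i * m) mod int r"
  have s0r: "0 \<le> s0" "s0 < int r" unfolding s0_def using r1 by auto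
  have v: "\<chi> (lam i t) = Zp (sg i * s0 * t)" if "0 \<le> t" "t < int r" for t
  proof -
    have "Zp (sg i * s0 * t) = Zp (sg i * (sg i * m) * t)"
      unfolding s0_def by (rule Zp_cong) (metis mod_mult_left_eq mod_mult_right_eq mult.assoc)
    also have "\<dots> = Zp (m * t)" using sg_sq by (simp add: mult.assoc[symmetric])
    finally show ?thesis using m that by simp
  qed
  show ?thesis using hchi_eq[OF s0r v] s0r v by blast
qed

end


context MS begin

lemma Z_sub: "x \<in> Zsub r \<Longrightarrow> x \<in> carrier G"
  unfolding Zsub_eq using zel_in by auto
lemma Z_mul: "x \<in> Zsub r \<Longrightarrow> y \<in> Zsub r \<Longrightarrow> x \<otimes>\<^bsub>G\<^esub> y \<in> Zsub r"
  unfolding Zsub_eq using zel_mul r1 by auto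
lemma Z_inv: "x \<in> Zsub r \<Longrightarrow> inv\<^bsub>G\<^esub> x \<in> Zsub r"
  unfolding Zsub_eq using zel_inv r1 by auto
lemma L_sub: "x \<in> Lsub r k \<Longrightarrow> x \<in> carrier G"
  unfolding Lsub_eq using lam_in by auto
lemma L_mul: "x \<in> Lsub r k \<Longrightarrow> y \<in> Lsub r k \<Longrightarrow> x \<otimes>\<^bsub>G\<^esub> y \<in> Lsub r k"
proof -
  assume "x \<in> Lsub r k" "y \<in> Lsub r k"
  then obtain t t' where t: "0 \<le> t" "t < int r" "x = lam k t" "0 \<le> t'" "t' < int r" "y = lam k t'"
    unfolding Lsub_eq by auto
  hence "x \<otimes>\<^bsub>G\<^esub> y = lam k ((t + t') mod int r)" using lam_mul by simp
  moreover have "(t + t') mod int r \<in> {0..<int r}" using r1 by simp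
  ultimately show ?thesis unfolding Lsub_eq by blast
qed
lemma L_inv: "x \<in> Lsub r k \<Longrightarrow> inv\<^bsub>G\<^esub> x \<in> Lsub r k"
proof -
  assume "x \<in> Lsub r k"
  then obtain t where t: "0 \<le> t" "t < int r" "x = lam k t" unfolding Lsub_eq by auto
  hence "inv\<^bsub>G\<^esub> x = lam k ((- t) mod int r)" using lam_inv by simp
  moreover have "(- t) mod int r \<in> {0..<int r}" using r1 by simp
  ultimately show ?thesis unfolding Lsub_eq by blast
qed

lemma th_hom': "x \<in> Zsub r \<Longrightarrow> y \<in> Zsub r \<Longrightarrow> \<theta> (x \<otimes>\<^bsub>G\<^esub> y) = \<theta> x * \<theta> y"
  using th_hom by blast

abbreviation "eth \<equiv> cpi G (Zsub r) \<theta>"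
abbreviation "eM \<equiv> cpi G (Lsub r (3 - i)) (\<lambda>_. 1)"

lemma eth_def': "eth = (\<lambda>x. (1 / of_nat r) * (\<Sum>s\<in>Zsub r. \<theta> (inv\<^bsub>G\<^esub> s) * delta s x))"
  unfolding cpi_def card_Z by simp

lemma eM_def': "eM = (\<lambda>x. (1 / of_nat r) * (\<Sum>s\<in>Lsub r (3 - i). 1 * delta s x))"
  unfolding cpi_def card_L by simp

lemma conv_zel_eth:
  assumes c: "c \<in> Zsub r"
  shows "conv G (delta c) eth = (\<lambda>x. \<theta> c * eth x)"
proof
  fix x
  have cC: "c \<in> carrier G" using Z_sub c .
  show "conv G (delta c) eth x = \<theta> c * eth x"
  proof (cases "x \<in> carrier G")
    case True
    have "(\<Sum>s\<in>Zsub r. \<theta> (inv\<^bsub>G\<^esub> s) * delta s (inv\<^bsub>G\<^esub> c \<otimes>\<^bsub>G\<^esub> x))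
        = (\<Sum>s'\<in>Zsub r. \<theta> (inv\<^bsub>G\<^esub> (inv\<^bsub>G\<^esub> c \<otimes>\<^bsub>G\<^esub> s')) * delta (inv\<^bsub>G\<^esub> c \<otimes>\<^bsub>G\<^esub> s') (inv\<^bsub>G\<^esub> c \<otimes>\<^bsub>G\<^esub> x))"
      apply (rule sum.reindex_bij_witness[where i = "\<lambda>s'. inv\<^bsub>G\<^esub> c \<otimes>\<^bsub>G\<^esub> s'" and j = "\<lambda>s. c \<otimes>\<^bsub>G\<^esub> s"])
      using c cC by (simp_all add: Z_mul Z_inv Z_sub)
    also have "\<dots> = (\<Sum>s'\<in>Zsub r. \<theta> c * (\<theta> (inv\<^bsub>G\<^esub> s') * delta s' x))"
    proof (rule sum.cong)
      fix s' assume s': "s' \<in> Zsub r"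
      have s'C: "s' \<in> carrier G" using Z_sub s' .
      have "inv\<^bsub>G\<^esub> (inv\<^bsub>G\<^esub> c \<otimes>\<^bsub>G\<^esub> s') = inv\<^bsub>G\<^esub> s' \<otimes>\<^bsub>G\<^esub> c"
        using cC s'C by (simp add: inv_mult_group)
      hence e1: "\<theta> (inv\<^bsub>G\<^esub> (inv\<^bsub>G\<^esub> c \<otimes>\<^bsub>G\<^esub> s')) = \<theta> (inv\<^bsub>G\<^esub> s') * \<theta> c"
        using th_hom' Z_inv s' c by simp
      have e2: "delta (inv\<^bsub>G\<^esub> c \<otimes>\<^bsub>G\<^esub> s') (inv\<^bsub>G\<^esub> c \<otimes>\<^bsub>G\<^esub> x) = delta s' x"
        unfolding delta_def using cC s'C True by simp
      show "\<theta> (inv\<^bsub>G\<^esub> (inv\<^bsub>G\<^esub> c \<otimes>\<^bsub>G\<^esub> s')) * delta (inv\<^bsub>G\<^esub> c \<otimes>\<^bsub>G\<^esub> s') (inv\<^bsub>G\<^esub> c \<otimes>\<^bsub>G\<^esub> x)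
          = \<theta> c * (\<theta> (inv\<^bsub>G\<^esub> s') * delta s' x)" unfolding e1 e2 by (simp add: ac_simps)
    qed simp
    finally show ?thesis using True cC
      by (simp add: conv_delta_L eth_def' sum_distrib_left[symmetric] mult.left_commute)
  next
    case False
    have "delta s x = (0::'k)" if "s \<in> Zsub r" for s :: gelem
      using False Z_sub[OF that] unfolding delta_def by auto
    hence "(\<Sum>s\<in>Zsub r. \<theta> (inv\<^bsub>G\<^esub> s) * delta s x) = (\<Sum>s\<in>Zsub r. 0)"
      by (intro sum.cong) simp_all
    hence "(\<Sum>s\<in>Zsub r. \<theta> (inv\<^bsub>G\<^esub> s) * delta s x) = 0" by simp
    thus ?thesis using False cC by (simp add: conv_delta_L eth_def')
  qed
qed

lemma conjg_eth:
  assumes g: "g \<in> carrier G"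
  shows "conjg G eth g = eth"
proof -
  have "conjg G (delta s) g = (delta s :: 'k galg)" if s: "s \<in> Zsub r" for s
  proof -
    obtain u where u: "0 \<le> u" "u < int r" "s = zel u" using s unfolding Zsub_eq by auto
    have "inv\<^bsub>G\<^esub> g \<otimes>\<^bsub>G\<^esub> s \<otimes>\<^bsub>G\<^esub> g = s"
      using zel_central[OF u(1,2) g] u g zel_in[OF u(1,2)] by (simp add: m_assoc)
    thus ?thesis using conjg_delta[OF g Z_sub[OF s]] by simp
  qed
  hence "(\<Sum>s\<in>Zsub r. \<theta> (inv\<^bsub>G\<^esub> s) * conjg G (delta s) g x) = (\<Sum>s\<in>Zsub r. \<theta> (inv\<^bsub>G\<^esub> s) * delta s x)" for x
    by (intro sum.cong) simp_all
  thus ?thesis unfolding eth_def' conjg_lin[OF g] by simp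
qed

end


context MS begin

definition kr :: 'k where "kr = 1 / of_nat r"

lemma kr_r: "kr * of_nat r = 1"
  unfolding kr_def using rnz by simp

lemma eth_kr: "eth = (\<lambda>x. kr * (\<Sum>s\<in>Zsub r. \<theta> (inv\<^bsub>G\<^esub> s) * delta s x))"
  unfolding eth_def' kr_def ..

lemma eM_kr: "eM = (\<lambda>x. kr * (\<Sum>s\<in>Lsub r (3 - i). 1 * delta s x))"
  unfolding eM_def' kr_def ..

definition "cc g \<mu> = inv\<^bsub>G\<^esub> \<mu> \<otimes>\<^bsub>G\<^esub> inv\<^bsub>G\<^esub> g \<otimes>\<^bsub>G\<^esub> \<mu> \<otimes>\<^bsub>G\<^esub> g"

lemma cc_eq: "g \<in> carrier G \<Longrightarrow> \<mu> \<in> carrier G \<Longrightarrow> inv\<^bsub>G\<^esub> g \<otimes>\<^bsub>G\<^esub> \<mu> \<otimes>\<^bsub>G\<^esub> g = \<mu> \<otimes>\<^bsub>G\<^esub> cc g \<mu>"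
  unfolding cc_def by (simp add: m_assoc)

lemma cc_val: "0 \<le> s \<Longrightarrow> s < int r \<Longrightarrow> 0 \<le> t \<Longrightarrow> t < int r \<Longrightarrow>
   cc (lam i t) (lam (3 - i) s) = zel ((sg i * s * t) mod int r)"
  unfolding cc_def using conj_lam[OF i12] by simp

lemma cc_Z: "g \<in> Lsub r i \<Longrightarrow> \<mu> \<in> Lsub r (3 - i) \<Longrightarrow> cc g \<mu> \<in> Zsub r"
  unfolding Lsub_eq using cc_val zel_Z r1 by auto

lemma conjg_eM: "g \<in> carrier G \<Longrightarrow>
  conjg G eM g = (\<lambda>x. kr * (\<Sum>\<mu>\<in>Lsub r (3 - i). 1 * delta (\<mu> \<otimes>\<^bsub>G\<^esub> cc g \<mu>) x))"
proof -
  assume g: "g \<in> carrier G"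
  have "conjg G (delta \<mu>) g = (delta (\<mu> \<otimes>\<^bsub>G\<^esub> cc g \<mu>) :: 'k galg)" if "\<mu> \<in> Lsub r (3 - i)" for \<mu>
    using conjg_delta[OF g L_sub[OF that]] cc_eq[OF g L_sub[OF that]] by simp
  thus ?thesis unfolding eM_kr conjg_lin[OF g] by simp
qed

lemma key_conv:
  assumes mu: "\<mu> \<in> carrier G" and c: "c \<in> Zsub r"
  shows "conv G (conv G a (delta (\<mu> \<otimes>\<^bsub>G\<^esub> c))) eth = (\<lambda>x. \<theta> c * conv G a (conv G (delta \<mu>) eth) x)"
proof -
  have "conv G (conv G a (delta (\<mu> \<otimes>\<^bsub>G\<^esub> c))) eth = conv G a (conv G (conv G (delta \<mu>) (delta c)) eth)"
    by (subst delta_mul[OF mu Z_sub[OF c], symmetric]) (simp add: conv_assoc)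
  also have "\<dots> = conv G a (conv G (delta \<mu>) (\<lambda>x. \<theta> c * eth x))"
    by (simp add: conv_assoc conv_zel_eth[OF c])
  also have "\<dots> = (\<lambda>x. \<theta> c * conv G a (conv G (delta \<mu>) eth) x)"
    by (simp add: conv_smultR)
  finally show ?thesis .
qed

lemma per_g:
  assumes g: "g \<in> Lsub r i" and ag: "conjg G a g = (\<lambda>x. \<chi> g * a x)"
  shows "conjg G (conv G (conv G a eM) eth) g
     = (\<lambda>x. \<chi> g * (kr * (\<Sum>\<mu>\<in>Lsub r (3 - i). \<theta> (cc g \<mu>) * conv G a (conv G (delta \<mu>) eth) x)))"
proof -
  have gC: "g \<in> carrier G" using L_sub[OF g] .
  have "conjg G (conv G (conv G a eM) eth) g = conv G (conv G (conjg G a g) (conjg G eM g)) (conjg G eth g)"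
    using gC by (simp add: conjg_conv)
  also have "\<dots> = conv G (conv G (\<lambda>x. \<chi> g * a x) (\<lambda>x. kr * (\<Sum>\<mu>\<in>Lsub r (3 - i). 1 * delta (\<mu> \<otimes>\<^bsub>G\<^esub> cc g \<mu>) x))) eth"
    using gC by (simp only: ag conjg_eM conjg_eth)
  also have "\<dots> = (\<lambda>x. \<chi> g * (kr * (\<Sum>\<mu>\<in>Lsub r (3 - i). conv G (conv G a (\<lambda>y. 1 * delta (\<mu> \<otimes>\<^bsub>G\<^esub> cc g \<mu>) y)) eth x)))"
    by (simp only: conv_smultL conv_smultR conv_sumL conv_sumR)
  also have "\<dots> = (\<lambda>x. \<chi> g * (kr * (\<Sum>\<mu>\<in>Lsub r (3 - i). \<theta> (cc g \<mu>) * conv G a (conv G (delta \<mu>) eth) x)))"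
  proof -
    have "conv G (conv G a (\<lambda>y. 1 * delta (\<mu> \<otimes>\<^bsub>G\<^esub> cc g \<mu>) y)) eth x = \<theta> (cc g \<mu>) * conv G a (conv G (delta \<mu>) eth) x"
      if mu: "\<mu> \<in> Lsub r (3 - i)" for \<mu> x
      using key_conv[OF L_sub[OF mu] cc_Z[OF g mu]] by simp
    thus ?thesis by (intro ext arg_cong2[where f = "(*)"] refl sum.cong) simp_all
  qed
  finally show ?thesis .
qed

lemma scal:
  assumes s0: "0 \<le> s0" "s0 < int r"
    and vals: "\<And>t. 0 \<le> t \<Longrightarrow> t < int r \<Longrightarrow> \<chi> (lam i t) = Zp (sg i * s0 * t)"
    and mu: "\<mu> \<in> Lsub r (3 - i)"
  shows "(\<Sum>g\<in>Lsub r i. \<chi> g * \<theta> (cc g \<mu>)) = (if \<mu> = inv\<^bsub>G\<^esub> (lam (3 - i) s0) then of_nat r else 0)"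
proof -
  obtain s where s: "0 \<le> s" "s < int r" "\<mu> = lam (3 - i) s" using mu unfolding Lsub_eq by auto
  have "(\<Sum>g\<in>Lsub r i. \<chi> g * \<theta> (cc g \<mu>)) = (\<Sum>t\<in>{0..<int r}. \<chi> (lam i t) * \<theta> (cc (lam i t) \<mu>))"
    unfolding Lsub_eq by (subst sum.reindex) (auto intro: inj_onI lam_inj)
  also have "\<dots> = (\<Sum>t\<in>{0..<int r}. Zp ((sg i * (s0 + s)) * t))"
  proof (rule sum.cong)
    fix t assume t: "t \<in> {0..<int r}"
    have "\<chi> (lam i t) * \<theta> (cc (lam i t) \<mu>) = Zp (sg i * s0 * t) * Zp (sg i * s * t)"
      using t s vals cc_val th_zel_mod by simp
    also have "\<dots> = Zp ((sg i * (s0 + s)) * t)" by (simp add: Zp_add[symmetric] algebra_simps)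
    finally show "\<chi> (lam i t) * \<theta> (cc (lam i t) \<mu>) = Zp ((sg i * (s0 + s)) * t)" .
  qed simp
  also have "\<dots> = (if int r dvd (sg i * (s0 + s)) then of_nat r else 0)" by (rule geo)
  also have "(int r dvd (sg i * (s0 + s))) = (\<mu> = inv\<^bsub>G\<^esub> (lam (3 - i) s0))"
  proof -
    have "(int r dvd (sg i * (s0 + s))) = (int r dvd (s0 + s))"
      using dvd_minus_iff[of "int r" "s0 + s"] by (simp add: sg_def)
    also have "\<dots> = (s = (- s0) mod int r)"
    proof
      assume "int r dvd (s0 + s)"
      hence "s mod int r = (- s0) mod int r" using mod_eq_dvd_iff by (metis diff_minus_eq_add add.commute)
      thus "s = (- s0) mod int r" using s by simp
    next
      assume "s = (- s0) mod int r"
      hence "s mod int r = (- s0) mod int r" by simp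
      thus "int r dvd (s0 + s)" using mod_eq_dvd_iff by (metis diff_minus_eq_add add.commute)
    qed
    also have "\<dots> = (\<mu> = inv\<^bsub>G\<^esub> (lam (3 - i) s0))"
      using s s0 lam_inv[OF s0, of "3 - i"] lam_inj[of "3 - i" s "(- s0) mod int r"] by auto
    finally show ?thesis .
  qed
  finally show ?thesis .
qed

end


context MS begin

lemma finite_L: "finite (Lsub r k)"
  unfolding Lsub_eq by simp

lemma E3:
  assumes c: "\<chi> \<in> Irr G (Lsub r i)" and a: "a \<in> Achi p l r g0 i \<chi>"
  shows "(\<lambda>x. \<Sum>g\<in>Lsub r i. conjg G (conv G (conv G a eM) eth) g x)
       = conv G (conv G a (delta (inv\<^bsub>G\<^esub> (hchi p l r g0 \<theta> i \<chi>)))) eth"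
proof -
  obtain s0 where s0: "0 \<le> s0" "s0 < int r" and h: "hchi p l r g0 \<theta> i \<chi> = lam (3 - i) s0"
    and vals: "\<And>t. 0 \<le> t \<Longrightarrow> t < int r \<Longrightarrow> \<chi> (lam i t) = Zp (sg i * s0 * t)"
    using Irr_hchi[OF c] by blast
  define hi where "hi = inv\<^bsub>G\<^esub> (lam (3 - i) s0)"
  have hiM: "hi \<in> Lsub r (3 - i)" unfolding hi_def using s0 by (intro L_inv) (auto simp: Lsub_eq)
  define Y where "Y \<mu> = conv G a (conv G (delta \<mu>) eth)" for \<mu>
  have ag: "conjg G a g = (\<lambda>x. \<chi> g * a x)" if "g \<in> Lsub r i" for g
    using a that unfolding Achi_def by auto
  show ?thesis
  proof
    fix x
    have "(\<Sum>g\<in>Lsub r i. conjg G (conv G (conv G a eM) eth) g x)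
       = (\<Sum>g\<in>Lsub r i. \<chi> g * (kr * (\<Sum>\<mu>\<in>Lsub r (3 - i). \<theta> (cc g \<mu>) * Y \<mu> x)))"
      unfolding Y_def by (intro sum.cong refl) (simp add: per_g ag)
    also have "\<dots> = (\<Sum>g\<in>Lsub r i. \<Sum>\<mu>\<in>Lsub r (3 - i). kr * (\<chi> g * \<theta> (cc g \<mu>) * Y \<mu> x))"
      by (simp add: sum_distrib_left mult_ac)
    also have "\<dots> = (\<Sum>\<mu>\<in>Lsub r (3 - i). \<Sum>g\<in>Lsub r i. kr * (\<chi> g * \<theta> (cc g \<mu>) * Y \<mu> x))"
      by (rule sum.swap)
    also have "\<dots> = (\<Sum>\<mu>\<in>Lsub r (3 - i). kr * ((\<Sum>g\<in>Lsub r i. \<chi> g * \<theta> (cc g \<mu>)) * Y \<mu> x))"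
      by (simp add: sum_distrib_left sum_distrib_right)
    also have "\<dots> = (\<Sum>\<mu>\<in>Lsub r (3 - i). if \<mu> = hi then kr * (of_nat r * Y \<mu> x) else 0)"
      by (intro sum.cong refl) (simp add: scal[OF s0 vals] hi_def)
    also have "\<dots> = kr * of_nat r * Y hi x"
      using hiM by (simp add: sum.delta' finite_L mult.assoc)
    also have "\<dots> = conv G (conv G a (delta (inv\<^bsub>G\<^esub> (hchi p l r g0 \<theta> i \<chi>)))) eth x"
      unfolding kr_r Y_def h hi_def by (simp add: conv_assoc)
    finally show "(\<Sum>g\<in>Lsub r i. conjg G (conv G (conv G a eM) eth) g x)
       = conv G (conv G a (delta (inv\<^bsub>G\<^esub> (hchi p l r g0 \<theta> i \<chi>)))) eth x" .
  qed
qed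

end


context MS begin

abbreviation "AA \<equiv> Aalg p l i :: 'k galg set"
abbreviation "EE \<equiv> embDP i ` DPset p l"

lemma AA_iff: "a \<in> AA \<longleftrightarrow> (\<forall>x. a x \<noteq> 0 \<longrightarrow> x \<in> EE)"
  unfolding Aalg_def supported_in_def by simp

lemma EE_sub: "x \<in> EE \<Longrightarrow> x \<in> carrier G"
  unfolding embDP_def G_carrier Hset_def using r1 by (auto simp: DPone_in)

lemma AA_add: "a \<in> AA \<Longrightarrow> b \<in> AA \<Longrightarrow> (\<lambda>x. a x + b x) \<in> AA"
  unfolding AA_iff by (metis add.right_neutral add_0)

lemma AA_smult: "a \<in> AA \<Longrightarrow> (\<lambda>x. c * a x) \<in> AA"
  unfolding AA_iff by auto

lemma AA_zero: "(\<lambda>_. 0) \<in> AA"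
  unfolding AA_iff by auto

lemma AA_sum: "finite S \<Longrightarrow> (\<forall>s\<in>S. b s \<in> AA) \<Longrightarrow> (\<lambda>x. \<Sum>s\<in>S. b s x) \<in> AA"
proof (induction S rule: finite_induct)
  case empty thus ?case using AA_zero by simp
next
  case (insert s S)
  hence "(\<lambda>x. b s x + (\<Sum>s\<in>S. b s x)) \<in> AA" using AA_add by auto
  thus ?case using insert by simp
qed

definition Pred :: "('k galg \<Rightarrow> 'k galg) \<Rightarrow> bool" where
  "Pred f \<longleftrightarrow>
      (\<forall>a\<in>Aalg p l i. \<forall>b\<in>Aalg p l i. f (\<lambda>x. a x + b x) = (\<lambda>x. f a x + f b x))
    \<and> (\<forall>c. \<forall>a\<in>Aalg p l i. f (\<lambda>x. c * a x) = (\<lambda>x. c * f a x))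
    \<and> (\<forall>\<chi>\<in>Irr (Grp p l r g0) (Lsub r i). \<forall>a\<in>Achi p l r g0 i \<chi>.
         f a = conv (Grp p l r g0)
                 (conv (Grp p l r g0) a (delta (inv\<^bsub>Grp p l r g0\<^esub> (hchi p l r g0 \<theta> i \<chi>))))
                 (cpi (Grp p l r g0) (Zsub r) \<theta>))
    \<and> (\<forall>a. a \<notin> Aalg p l i \<longrightarrow> f a = (\<lambda>_. 0))"

lemma iota_eq: "iota p l r g0 \<theta> i = (THE f. Pred f)"
  unfolding iota_def Pred_def ..

lemma Pred_zero: "Pred f \<Longrightarrow> f (\<lambda>_. 0) = (\<lambda>_. 0)"
proof -
  assume P: "Pred f"
  hence "\<forall>c. \<forall>a\<in>AA. f (\<lambda>x. c * a x) = (\<lambda>x. c * f a x)" unfolding Pred_def by blast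
  from this[rule_format, of "\<lambda>_. 0" 0] AA_zero show ?thesis by simp
qed

lemma Pred_sum:
  assumes P: "Pred f"
  shows "finite S \<Longrightarrow> (\<forall>s\<in>S. b s \<in> AA) \<Longrightarrow> f (\<lambda>x. \<Sum>s\<in>S. b s x) = (\<lambda>x. \<Sum>s\<in>S. f (b s) x)"
proof (induction S rule: finite_induct)
  case empty thus ?case using Pred_zero[OF P] by simp
next
  case (insert s S)
  have "f (\<lambda>x. \<Sum>s\<in>insert s S. b s x) = f (\<lambda>x. b s x + (\<Sum>s\<in>S. b s x))" using insert by simp
  also have "\<dots> = (\<lambda>x. f (b s) x + f (\<lambda>x. \<Sum>s\<in>S. b s x) x)"
  proof -
    have "\<forall>a\<in>AA. \<forall>b\<in>AA. f (\<lambda>x. a x + b x) = (\<lambda>x. f a x + f b x)" using P unfolding Pred_def by blast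
    from this[rule_format, of "b s" "\<lambda>x. \<Sum>s\<in>S. b s x"] show ?thesis using insert AA_sum[of S b] by simp
  qed
  also have "\<dots> = (\<lambda>x. \<Sum>s\<in>insert s S. f (b s) x)" using insert by simp
  finally show ?case .
qed

end


context MS begin

definition comp :: "int \<Rightarrow> 'k galg \<Rightarrow> 'k galg" where
  "comp s a = (\<lambda>x. kr * (\<Sum>t\<in>{0..<int r}. Zp (- (sg i * s * t)) * conjg G a (lam i t) x))"

lemma lam_C: "t \<in> {0..<int r} \<Longrightarrow> lam k t \<in> carrier G"
  using lam_in by auto

lemma conjg_AA:
  assumes a: "a \<in> AA" and t: "0 \<le> t" "t < int r"
  shows "conjg G a (lam i t) \<in> AA"
  unfolding AA_iff
proof (intro allI impI)
  fix x assume nz: "conjg G a (lam i t) x \<noteq> 0"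
  let ?g = "lam i t"
  have gC: "?g \<in> carrier G" by (rule lam_in[OF t])
  have xC: "x \<in> carrier G" and ax: "a (?g \<otimes>\<^bsub>G\<^esub> x \<otimes>\<^bsub>G\<^esub> inv\<^bsub>G\<^esub> ?g) \<noteq> 0"
    using conjg_support[OF gC nz] by auto
  then obtain u where u: "u \<in> DPset p l" "?g \<otimes>\<^bsub>G\<^esub> x \<otimes>\<^bsub>G\<^esub> inv\<^bsub>G\<^esub> ?g = embDP i u"
    using a unfolding AA_iff by blast
  have "x = inv\<^bsub>G\<^esub> ?g \<otimes>\<^bsub>G\<^esub> (?g \<otimes>\<^bsub>G\<^esub> x \<otimes>\<^bsub>G\<^esub> inv\<^bsub>G\<^esub> ?g) \<otimes>\<^bsub>G\<^esub> ?g"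
    using gC xC by (simp add: m_assoc)
  thus "x \<in> EE" using u conj_E[OF i12 u(1) t] by simp
qed

lemma comp_AA: "a \<in> AA \<Longrightarrow> comp s a \<in> AA"
proof -
  assume a: "a \<in> AA"
  have "(\<lambda>x. \<Sum>t\<in>{0..<int r}. (\<lambda>t x. Zp (- (sg i * s * t)) * conjg G a (lam i t) x) t x) \<in> AA"
    by (rule AA_sum) (auto intro!: AA_smult conjg_AA[OF a])
  thus ?thesis unfolding comp_def by (auto intro: AA_smult)
qed

lemma shift_idx:
  assumes "0 \<le> t'" "t' < int r"
  shows "(\<Sum>t\<in>{0..<int r}. F t * W ((t + t') mod int r)) = (\<Sum>u\<in>{0..<int r}. F ((u - t') mod int r) * W u)"
  apply (rule sum.reindex_bij_witness[where i = "\<lambda>u. (u - t') mod int r" and j = "\<lambda>t. (t + t') mod int r"])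
  using assms r1 by (auto simp: mod_add_left_eq mod_diff_left_eq)

lemma Zp_shift: "Zp (- (sg i * s * ((u - t') mod int r))) = Zp (- (sg i * s * u)) * Zp (sg i * s * t')"
proof -
  have e: "(sg i * s * ((u - t') mod int r)) mod int r = (sg i * s * (u - t')) mod int r"
    by (simp add: mod_mult_right_eq)
  have "(- (sg i * s * ((u - t') mod int r))) mod int r = (- (sg i * s * (u - t'))) mod int r"
    using e by (metis mod_minus_eq)
  hence "Zp (- (sg i * s * ((u - t') mod int r))) = Zp (- (sg i * s * u) + sg i * s * t')"
    by (intro Zp_cong) (simp add: algebra_simps)
  thus ?thesis by (simp only: Zp_add)
qed

lemma comp_Achi:
  assumes a: "a \<in> AA" and s: "0 \<le> s" "s < int r"
  shows "comp s a \<in> Achi p l r g0 i (chis s)"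
proof -
  have "conjg G (comp s a) g = (\<lambda>x. chis s g * comp s a x)" if g: "g \<in> Lsub r i" for g
  proof -
    obtain t' where t': "0 \<le> t'" "t' < int r" "g = lam i t'" using g unfolding Lsub_eq by auto
    have gC: "g \<in> carrier G" using lam_in t' by simp
    show ?thesis
    proof
      fix x
      have "conjg G (comp s a) g x = kr * (\<Sum>t\<in>{0..<int r}. Zp (- (sg i * s * t)) * conjg G (conjg G a (lam i t)) g x)"
        unfolding comp_def conjg_lin[OF gC] ..
      also have "\<dots> = kr * (\<Sum>t\<in>{0..<int r}. Zp (- (sg i * s * t)) * (\<lambda>v. conjg G a (lam i v) x) ((t + t') mod int r))"
        using t' by (intro arg_cong2[where f = "(*)"] refl sum.cong) (auto simp: conjg_conjg lam_C lam_mul)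
      also have "\<dots> = kr * (\<Sum>u\<in>{0..<int r}. Zp (- (sg i * s * ((u - t') mod int r))) * conjg G a (lam i u) x)"
        using shift_idx[OF t'(1,2), of "\<lambda>t. Zp (- (sg i * s * t))" "\<lambda>v. conjg G a (lam i v) x"] by simp
      also have "\<dots> = Zp (sg i * s * t') * (kr * (\<Sum>u\<in>{0..<int r}. Zp (- (sg i * s * u)) * conjg G a (lam i u) x))"
        by (simp only: Zp_shift) (simp add: sum_distrib_left mult_ac)
      also have "\<dots> = chis s g * comp s a x"
        unfolding comp_def using chis_val[OF s t'(1,2)] t' by simp
      finally show "conjg G (comp s a) g x = chis s g * comp s a x" .
    qed
  qed
  thus ?thesis unfolding Achi_def using comp_AA[OF a] by auto
qed

lemma lam0: "lam k 0 = \<one>\<^bsub>G\<^esub>"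
  unfolding lam_def hel_def G_one Gone_def by simp

lemma comp_sum:
  assumes a: "a \<in> AA"
  shows "(\<lambda>x. \<Sum>s\<in>{0..<int r}. comp s a x) = a"
proof
  fix x
  have "(\<Sum>s\<in>{0..<int r}. comp s a x)
      = (\<Sum>s\<in>{0..<int r}. \<Sum>t\<in>{0..<int r}. kr * (Zp ((- (sg i * t)) * s) * conjg G a (lam i t) x))"
    unfolding comp_def sum_distrib_left by (intro sum.cong refl) (simp add: mult_ac)
  also have "\<dots> = (\<Sum>t\<in>{0..<int r}. \<Sum>s\<in>{0..<int r}. kr * (Zp ((- (sg i * t)) * s) * conjg G a (lam i t) x))"
    by (rule sum.swap)
  also have "\<dots> = (\<Sum>t\<in>{0..<int r}. kr * ((\<Sum>s\<in>{0..<int r}. Zp ((- (sg i * t)) * s)) * conjg G a (lam i t) x))"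
    by (simp only: sum_distrib_left sum_distrib_right)
  also have "\<dots> = (\<Sum>t\<in>{0..<int r}. if t = 0 then kr * (of_nat r * conjg G a (lam i t) x) else 0)"
  proof (rule sum.cong)
    fix t assume t: "t \<in> {0..<int r}"
    have "(int r dvd (- (sg i * t))) = (t = 0)"
    proof
      assume "int r dvd (- (sg i * t))"
      hence "int r dvd (sg i * t)" by simp
      hence "int r dvd t" by (rule sg_dvd)
      thus "t = 0" using t range_dvd_eq[of t 0] r1 by simp
    qed simp
    moreover have "(\<Sum>s\<in>{0..<int r}. Zp ((- (sg i * t)) * s)) = (if int r dvd (- (sg i * t)) then of_nat r else 0)"
      by (rule geo)
    ultimately have "(\<Sum>s\<in>{0..<int r}. Zp ((- (sg i * t)) * s)) = (if t = 0 then of_nat r else 0)"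
      by simp
    thus "kr * ((\<Sum>s\<in>{0..<int r}. Zp ((- (sg i * t)) * s)) * conjg G a (lam i t) x)
        = (if t = 0 then kr * (of_nat r * conjg G a (lam i t) x) else 0)"
      by (simp only:) simp
  qed simp
  also have "\<dots> = kr * of_nat r * conjg G a (lam i 0) x"
    using r1 by (simp add: sum.delta mult.assoc)
  also have "\<dots> = a x"
  proof -
    have "x \<notin> carrier G \<Longrightarrow> a x = 0" using a EE_sub unfolding AA_iff by blast
    thus ?thesis unfolding kr_r lam0 conjg_one by auto
  qed
  finally show "(\<Sum>s\<in>{0..<int r}. comp s a x) = a x" .
qed

end


context MS begin

definition FF :: "'k galg \<Rightarrow> 'k galg" where
  "FF a = (if a \<in> AA then (\<lambda>x. \<Sum>g\<in>Lsub r i. conjg G (conv G (conv G a eM) eth) g x) else (\<lambda>_. 0))"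

lemma Achi_AA: "a \<in> Achi p l r g0 i \<chi> \<Longrightarrow> a \<in> AA"
  unfolding Achi_def by auto

lemma Pred_FF: "Pred FF"
  unfolding Pred_def
proof (intro conjI ballI allI impI)
  fix a b :: "'k galg" assume a: "a \<in> AA" and b: "b \<in> AA"
  have "conjg G (conv G (conv G (\<lambda>x. a x + b x) eM) eth) g
      = (\<lambda>x. conjg G (conv G (conv G a eM) eth) g x + conjg G (conv G (conv G b eM) eth) g x)"
    if g: "g \<in> Lsub r i" for g
    using L_sub[OF g] by (simp add: conv_addL conjg_add)
  thus "FF (\<lambda>x. a x + b x) = (\<lambda>x. FF a x + FF b x)"
    unfolding FF_def using a b AA_add[OF a b] by (simp add: sum.distrib)
next
  fix c and a :: "'k galg" assume a: "a \<in> AA"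
  have "conjg G (conv G (conv G (\<lambda>x. c * a x) eM) eth) g
      = (\<lambda>x. c * conjg G (conv G (conv G a eM) eth) g x)"
    if g: "g \<in> Lsub r i" for g
    using L_sub[OF g] by (simp add: conv_smultL conjg_smult)
  thus "FF (\<lambda>x. c * a x) = (\<lambda>x. c * FF a x)"
    unfolding FF_def using a AA_smult[OF a] by (simp add: sum_distrib_left)
next
  fix \<chi> :: "gelem \<Rightarrow> 'k" and a :: "'k galg" assume c: "\<chi> \<in> Irr G (Lsub r i)" and a: "a \<in> Achi p l r g0 i \<chi>"
  show "FF a = conv G (conv G a (delta (inv\<^bsub>G\<^esub> (hchi p l r g0 \<theta> i \<chi>)))) eth"
    unfolding FF_def using Achi_AA[OF a] E3[OF c a] by simp
next
  fix a :: "'k galg" assume "a \<notin> AA"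
  thus "FF a = (\<lambda>_. 0)" unfolding FF_def by simp
qed

lemma Pred_val:
  assumes P: "Pred f" and a: "a \<in> AA"
  shows "f a = (\<lambda>x. \<Sum>s\<in>{0..<int r}. conv G (conv G (comp s a) (delta (inv\<^bsub>G\<^esub> (hchi p l r g0 \<theta> i (chis s))))) eth x)"
proof -
  have "f a = f (\<lambda>x. \<Sum>s\<in>{0..<int r}. comp s a x)" using comp_sum[OF a] by simp
  also have "\<dots> = (\<lambda>x. \<Sum>s\<in>{0..<int r}. f (comp s a) x)"
    using Pred_sum[OF P, of "{0..<int r}" "\<lambda>s. comp s a"] comp_AA[OF a] by simp
  also have "\<dots> = (\<lambda>x. \<Sum>s\<in>{0..<int r}. conv G (conv G (comp s a) (delta (inv\<^bsub>G\<^esub> (hchi p l r g0 \<theta> i (chis s))))) eth x)"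
  proof -
    have "f (comp s a) = conv G (conv G (comp s a) (delta (inv\<^bsub>G\<^esub> (hchi p l r g0 \<theta> i (chis s))))) eth"
      if s: "s \<in> {0..<int r}" for s
    proof -
      have "\<forall>\<chi>\<in>Irr G (Lsub r i). \<forall>a\<in>Achi p l r g0 i \<chi>.
         f a = conv G (conv G a (delta (inv\<^bsub>G\<^esub> (hchi p l r g0 \<theta> i \<chi>)))) eth"
        using P unfolding Pred_def by blast
      thus ?thesis using chis_Irr comp_Achi[OF a] s by simp
    qed
    thus ?thesis by simp
  qed
  finally show ?thesis .
qed

lemma Pred_unique: "Pred f \<Longrightarrow> Pred f' \<Longrightarrow> f = f'"
proof
  fix a assume P: "Pred f" and P': "Pred f'"
  show "f a = f' a"
  proof (cases "a \<in> AA")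
    case True thus ?thesis using Pred_val[OF P] Pred_val[OF P'] by simp
  next
    case False thus ?thesis using P P' unfolding Pred_def by simp
  qed
qed

lemma iota_FF: "iota p l r g0 \<theta> i = FF"
  unfolding iota_eq
  by (rule the1_equality) (use Pred_FF Pred_unique in blast)+

lemma main: "a \<in> AA \<Longrightarrow> iota p l r g0 \<theta> i a =
    (\<lambda>x. \<Sum>g\<in>Lsub r i. conjg G (conv G (conv G a (cpi G (Lsub r (3 - i)) (\<lambda>_. 1))) (cpi G (Zsub r) \<theta>)) g x)"
  unfolding iota_FF FF_def by simp

end

theorem proposition5p5:
  fixes p l r g0 :: nat and \<theta> :: "gelem \<Rightarrow> 'k::field"
    and i :: nat and a :: "'k galg"
  assumes l_prime: "prime l"
    and char_k: "CHAR('k) = l"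
    and alg_closed: "\<forall>q :: 'k poly. degree q \<ge> 1 \<longrightarrow> (\<exists>x. poly q x = 0)"
    and p_prime: "prime p" and p_ne_l: "p \<noteq> l"
    and g0: "0 < g0" "g0 < p" "ord p g0 = r"
    and r_gt1: "r > 1" and l_ndvd_r: "\<not> l dvd r"
    and theta_hom: "\<forall>x\<in>Zsub r. \<forall>y\<in>Zsub r. \<theta> (x \<otimes>\<^bsub>Grp p l r g0\<^esub> y) = \<theta> x * \<theta> y"
    and theta_nz: "\<forall>x\<in>Zsub r. \<theta> x \<noteq> 0"
    and theta_faithful: "inj_on \<theta> (Zsub r)"
    and i: "i \<in> {1, 2}"
    and a: "a \<in> Aalg p l i"
  shows "iota p l r g0 \<theta> i a =
    (\<lambda>x. \<Sum>g\<in>Lsub r i.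
        conjg (Grp p l r g0)
          (conv (Grp p l r g0)
             (conv (Grp p l r g0) a (cpi (Grp p l r g0) (Lsub r (3 - i)) (\<lambda>_. 1)))
             (cpi (Grp p l r g0) (Zsub r) \<theta>)) g x)"
proof -
  have p1: "p > 1" using p_prime prime_gt_1_nat by blast
  have l1: "l > 1" using l_prime prime_gt_1_nat by blast
  have "[g0 ^ r = 1] (mod p)" using ord_works[of g0 p] g0(3) by simp
  hence "g0 ^ r mod p = 1" using p1 unfolding cong_def by simp
  hence g0r: "int g0 ^ r mod int p = 1" by (metis of_nat_1 of_nat_mod of_nat_power)
  have rnz: "(of_nat r :: 'k) \<noteq> 0" using l_ndvd_r char_k by (simp add: of_nat_eq_0_iff_char_dvd)
  interpret MS p l r g0 \<theta> i
    by (unfold_locales) (use p1 l1 r_gt1 g0r theta_hom theta_nz theta_faithful i rnz in auto)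
  show ?thesis using main[OF a] by simp
qed


end
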